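(* Let $a$ be a prime, $s\ge1$, $k_1,\dots,k_s\ge0$ integers, $F=F_{a^{k_1}}\otimes\cdots\otimes F_{a^{k_s}}$ of size $N=a^{k_1+\cdots+k_s}$ with indexing group $I_F=\mathbb Z_{a^{k_1}}\times\cdots\times\mathbb Z_{a^{k_s}}$, $k_{\max}=\max_x k_x$, and $K(l)=\#\{x: k_x<l\}$. If $k_{\max}=0$ then $\mathbf D(F)=1$. If $k_{\max}>0$ then: (a) $\mathbf D(F)=\sum_{m=0}^{k_{\max}}\frac{N}{a^m}\,n_m$, where $n_m$ is the number of elements of order $a^m$ in $I_F$ (equivalently, the number of rows of $F$ consisting of $a^m$-th roots of unity). (b) $\mathbf D(F)=\frac Na\Big((a-1)\big(1+\sum_{m=1}^{k_{\max}}a^{-m+\sum_{x=1}^s\min(k_x,m)}\big)+a^{-k_{\max}+\sum_{x=1}^sk_x}\Big)$. (c) $\mathbf D(F)=\frac Na\Big((a-1)\big(1+\sum_{m=1}^{k_{\max}}a^{sm-\sum_{l=1}^m(K(l)+1)}\big)+a^{sk_{\max}-\sum_{l=1}^{k_{\max}}(K(l)+1)}\Big)$, and $sk_{\max}-\sum_{l=1}^{k_{\max}}(K(l)+1)=-k_{\max}+\sum_xk_x$. (d) Let $0<c_1<\dots<c_r=k_{\max}$ be the distinct nonzero values among the $k_x$, and set $c_0=0$. For $(\alpha,\beta)=(c_{y-1},c_y)$, $y=1,\dots,r$, let $\mu=s-K(\beta)-1\ (\ge0)$ and $$P(\alpha,\beta)=a^{\sum_{k_x\le\alpha}k_x+\mu(\alpha+1)}\sum_{d=0}^{\beta-\alpha-1}a^{\mu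 d}$$ (empty sums are $0$; note $\sum_{k_x\le\alpha}k_x+\mu(\alpha+1)=s(\alpha+1)-\sum_{l=1}^{\alpha+1}(K(l)+1)$). Then $\mu=0$ exactly when $y=r$ and $k_{\max}$ occurs only once among the $k_x$, in which case $P(\alpha,\beta)=a^{\sum_{k_x\le\alpha}k_x}(\beta-\alpha)$; otherwise $P(\alpha,\beta)=a^{\sum_{k_x\le\alpha}k_x+\mu(\alpha+1)}\frac{1-a^{\mu(\beta-\alpha)}}{1-a^{\mu}}$. Moreover $$\mathbf D(F)=\frac Na\Big((a-1)\big(1+P(c_0,c_1)+P(c_1,c_2)+\cdots+P(c_{r-1},c_r)\big)+a^{-k_{\max}+\sum_xk_x}\Big),$$ and the degrees (as polynomials in $a$) of $1,P(c_0,c_1),\dots,P(c_{r-1},c_r)$ form an increasing sequence, except that the last two degrees are equal, which happens if and only if $k_{\max}$ occurs exactly once among the $k_x$. (e) $\mathbf D(F)=\frac Na\Big((a-1)\big(1+a^{e_1}(1+a^{e_2}(1+\cdots(1+a^{e_{k_{\max}}})\cdots))\big)+a^{sk_{\max}-\sum_{l=1}^{k_{\max}}(K(l)+1)}\Big)$ with $e_m=s-(K(m)+1)$; each $e_m\ge0$, and $e_m=0$ if and only if $k_{\max}$ occurs exactly once among the $k_x$ and $c_{r-1}+1\le m\le c_r$.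
   Context: For $n\ge1$, $F_n$ is the $n\times n$ matrix with rows and columns indexed by $\mathbb Z_n$ and entries $e^{2\pi i\,\tilde i\tilde j/n}$, and a Kronecker product $F_{N_1}\otimes\cdots\otimes F_{N_r}$ is indexed by $\mathbb Z_{N_1}\times\cdots\times\mathbb Z_{N_r}$ (entry at $(i,j)$ is $\prod_x(F_{N_x})_{i_x,j_x}$). For an $N\times N$ matrix $V$ with no zero entries and $V=\alpha U$ with $U$ unitary and $\alpha\ne0$, the undephased defect is $\mathbf D(V)=\dim_{\mathbb R}\{iR\circ V:\ R\text{ real},\ (iR\circ V)V^*\text{ antihermitian}\}$ ($\circ$ entrywise product). For a Fourier matrix this equals the number of entries of $F$ equal to $1$. *)

theory Defs
  imports "HOL-Analysis.Analysis" "HOL-Library.Function_Algebras"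
    "HOL-Computational_Algebra.Polynomial" "HOL-Computational_Algebra.Primes"
begin

text \<open>A matrix with rows and columns indexed by the finite set I is a function
  of type idx => idx => complex (entries outside I are irrelevant / zero).\<close>

definition mat_mult :: "'i set \<Rightarrow> ('i \<Rightarrow> 'i \<Rightarrow> complex) \<Rightarrow> ('i \<Rightarrow> 'i \<Rightarrow> complex) \<Rightarrow> ('i \<Rightarrow> 'i \<Rightarrow> complex)"
  where "mat_mult I A B = (\<lambda>i j. \<Sum>l\<in>I. A i l * B l j)"

definition mat_adj :: "('i \<Rightarrow> 'i \<Rightarrow> complex) \<Rightarrow> ('i \<Rightarrow> 'i \<Rightarrow> complex)"
  where "mat_adj A = (\<lambda>i j. cnj (A j i))"

definition antihermitian_on :: "'i set \<Rightarrow> ('i \<Rightarrow> 'i \<Rightarrow> complex) \<Rightarrow> bool"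
  where "antihermitian_on I A \<longleftrightarrow> (\<forall>i\<in>I. \<forall>j\<in>I. A i j = - cnj (A j i))"

definition rscale :: "real \<Rightarrow> ('i \<Rightarrow> 'i \<Rightarrow> complex) \<Rightarrow> ('i \<Rightarrow> 'i \<Rightarrow> complex)"
  where "rscale r A = (\<lambda>i j. complex_of_real r * A i j)"

definition undephased_defect :: "'i set \<Rightarrow> ('i \<Rightarrow> 'i \<Rightarrow> complex) \<Rightarrow> nat"
  where "undephased_defect I V =
     vector_space.dim rscale
       {W. \<exists>R :: 'i \<Rightarrow> 'i \<Rightarrow> real.
              (\<forall>i j. (i \<notin> I \<or> j \<notin> I) \<longrightarrow> R i j = 0) \<and>
              W = (\<lambda>i j. \<i> * complex_of_real (R i j) * V i j) \<and>
              antihermitian_on I (mat_mult I W (mat_adj V))}"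

text \<open>Index group Z_{n_1} x ... x Z_{n_s}, with elements represented as lists of
  canonical representatives.\<close>
definition index_set :: "nat list \<Rightarrow> nat list set"
  where "index_set ns = {i. length i = length ns \<and> (\<forall>x<length ns. i ! x < ns ! x)}"

definition fourier_kron :: "nat list \<Rightarrow> nat list \<Rightarrow> nat list \<Rightarrow> complex"
  where "fourier_kron ns i j =
     (if i \<in> index_set ns \<and> j \<in> index_set ns then
        (\<Prod>x<length ns. exp (2 * of_real pi * \<i> * of_nat (i ! x) * of_nat (j ! x) / of_nat (ns ! x)))
      else 0)"

definition elem_order :: "nat list \<Rightarrow> nat list \<Rightarrow> nat"
  where "elem_order ns i = (LEAST d. 0 < d \<and> (\<forall>x<length ns. ns ! x dvd d * i ! x))"

definition Kcount :: "nat list \<Rightarrow> nat \<Rightarrow> nat"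
  where "Kcount ks l = card {x. x < length ks \<and> ks ! x < l}"

definition cval :: "nat list \<Rightarrow> nat \<Rightarrow> nat"
  where "cval ks y = (if y = 0 then 0 else sorted_list_of_set {k \<in> set ks. 0 < k} ! (y - 1))"

definition rnum :: "nat list \<Rightarrow> nat"
  where "rnum ks = card {k \<in> set ks. 0 < k}"

definition mu :: "nat list \<Rightarrow> nat \<Rightarrow> int"
  where "mu ks \<beta> = int (length ks) - int (Kcount ks \<beta>) - 1"

definition sum_le :: "nat list \<Rightarrow> nat \<Rightarrow> nat"
  where "sum_le ks \<alpha> = (\<Sum>x | x < length ks \<and> ks ! x \<le> \<alpha>. ks ! x)"

definition Ppoly :: "nat list \<Rightarrow> nat \<Rightarrow> nat \<Rightarrow> real poly"
  where "Ppoly ks \<alpha> \<beta> =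
     monom 1 (sum_le ks \<alpha> + nat (mu ks \<beta>) * (\<alpha> + 1)) *
     (\<Sum>d<\<beta> - \<alpha>. monom 1 (nat (mu ks \<beta>) * d))"

fun nest :: "real \<Rightarrow> int list \<Rightarrow> real" where
  "nest x [] = 1"
| "nest x (e # es) = 1 + x powi e * nest x es"

end

theory Submission
  imports Defs
begin

definition ew :: "nat list \<Rightarrow> (nat \<Rightarrow> int) \<Rightarrow> complex" where
  "ew ns f = (\<Prod>x<length ns. exp (2 * of_real pi * \<i> * of_int (f x) / of_nat (ns ! x)))"

lemma exp_int_eq_1:
  fixes m :: int and n :: nat
  assumes "0 < n"
  shows "exp (2 * of_real pi * \<i> * of_int m / of_nat n) = 1 \<longleftrightarrow> int n dvd m"
proof
  assume "int n dvd m"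
  then obtain j where j: "m = int n * j" by (auto simp: dvd_def)
  have "2 * of_real pi * \<i> * of_int m / of_nat n = \<i> * (of_int j * (of_real pi * 2))"
    using assms by (simp add: j field_simps)
  then show "exp (2 * of_real pi * \<i> * of_int m / of_nat n) = 1" by simp
next
  assume h: "exp (2 * of_real pi * \<i> * of_int m / of_nat n) = 1"
  have "Im (2 * of_real pi * \<i> * of_int m / of_nat n) = 2 * pi * m / n"
    by simp
  with h obtain j :: int where "2 * pi * m / n = of_int (2 * j) * pi"
    unfolding exp_eq_1 by auto
  then have "real_of_int m = real n * of_int j" using assms pi_gt_zero
    by (simp add: field_simps)
  then have "m = int n * j" by (metis of_int_eq_iff of_int_mult of_int_of_nat_eq)
  then show "int n dvd m" by simp
qed

lemma exp_int_1:
  fixes m :: int and n :: nat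
  assumes "int n dvd m"
  shows "exp (2 * of_real pi * \<i> * of_int m / of_nat n) = 1"
proof (cases "n = 0")
  case True then show ?thesis using assms by simp
next
  case False then show ?thesis using exp_int_eq_1 assms by simp
qed

lemma ew_mult: "ew ns f * ew ns g = ew ns (\<lambda>x. f x + g x)"
  unfolding ew_def prod.distrib[symmetric]
  by (rule prod.cong) (auto simp: exp_add[symmetric] add_divide_distrib distrib_left)

lemma ew_cnj: "cnj (ew ns f) = ew ns (\<lambda>x. - f x)"
  unfolding ew_def cnj_prod
  by (rule prod.cong) (auto simp: exp_cnj)

lemma ew_one: "(\<And>x. x < length ns \<Longrightarrow> int (ns ! x) dvd f x) \<Longrightarrow> ew ns f = 1"
  unfolding ew_def by (rule prod.neutral) (auto intro: exp_int_1)

lemma ew_cong: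
  assumes "\<And>x. x < length ns \<Longrightarrow> int (ns ! x) dvd f x - g x"
  shows "ew ns f = ew ns g"
proof -
  have "ew ns f = ew ns g * ew ns (\<lambda>x. f x - g x)" by (simp add: ew_mult)
  also have "ew ns (\<lambda>x. f x - g x) = 1" using assms by (rule ew_one)
  finally show ?thesis by simp
qed

lemma ew_norm: "norm (ew ns f) = 1"
  unfolding ew_def prod_norm[symmetric] norm_exp_eq_Re by (auto intro!: prod.neutral)

lemma ew_nonzero: "ew ns f \<noteq> 0"
  using ew_norm[of ns f] by auto

lemma geom_root:
  fixes m :: int and n :: nat
  assumes "0 < n"
  shows "(\<Sum>d<n. exp (2 * of_real pi * \<i> * of_int m * of_nat d / of_nat n)) =
         (if int n dvd m then of_nat n else 0)"
proof -
  define z where "z = exp (2 * of_real pi * \<i> * of_int m / of_nat n)"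
  have pw: "exp (2 * of_real pi * \<i> * of_int m * of_nat d / of_nat n) = z ^ d" for d
    unfolding z_def exp_of_nat_mult[symmetric] by (simp add: field_simps)
  have zn: "z ^ n = 1"
  proof -
    have "z ^ n = exp (2 * of_real pi * \<i> * of_int (m * int n) / of_nat n)"
      using pw[of n] by simp
    also have "\<dots> = 1" by (rule exp_int_1) simp
    finally show ?thesis .
  qed
  show ?thesis
  proof (cases "int n dvd m")
    case True
    then have "z = 1" unfolding z_def by (rule exp_int_1)
    then show ?thesis by (simp add: pw True)
  next
    case False
    then have "z \<noteq> 1" unfolding z_def using exp_int_eq_1[OF assms] by simp
    then show ?thesis by (simp add: pw sum_gp_strict zn False)
  qed
qed

lemma index_set_Nil: "index_set [] = {[]}"
  by (auto simp: index_set_def)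

lemma index_set_Cons: "index_set (n # ns) = (\<lambda>(h,t). h # t) ` ({..<n} \<times> index_set ns)"
proof (rule set_eqI)
  fix u
  show "u \<in> index_set (n # ns) \<longleftrightarrow> u \<in> (\<lambda>(h,t). h # t) ` ({..<n} \<times> index_set ns)"
  proof
    assume u: "u \<in> index_set (n # ns)"
    then obtain h t where ht: "u = h # t" by (cases u) (auto simp: index_set_def)
    with u have "h < n" "t \<in> index_set ns"
      by (auto simp: index_set_def)
    then show "u \<in> (\<lambda>(h,t). h # t) ` ({..<n} \<times> index_set ns)" using ht by auto
  next
    assume "u \<in> (\<lambda>(h,t). h # t) ` ({..<n} \<times> index_set ns)"
    then show "u \<in> index_set (n # ns)"
      by (auto simp: index_set_def less_Suc_eq_0_disj)
  qed
qed

lemma finite_index_set: "finite (index_set ns)"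
  by (induction ns) (auto simp: index_set_Nil index_set_Cons)

lemma sum_index_set_prod:
  fixes f :: "nat \<Rightarrow> nat \<Rightarrow> 'a::comm_semiring_1"
  shows "(\<Sum>u\<in>index_set ns. \<Prod>x<length ns. f x (u ! x)) = (\<Prod>x<length ns. \<Sum>v<ns ! x. f x v)"
proof (induction ns arbitrary: f)
  case Nil
  then show ?case by (simp add: index_set_Nil)
next
  case (Cons n ns)
  have inj: "inj_on (\<lambda>(h,t). h # t) ({..<n} \<times> index_set ns)"
    by (auto simp: inj_on_def)
  have "(\<Sum>u\<in>index_set (n # ns). \<Prod>x<length (n # ns). f x (u ! x))
      = (\<Sum>(h,t)\<in>{..<n} \<times> index_set ns. f 0 h * (\<Prod>x<length ns. f (Suc x) (t ! x)))"
    unfolding index_set_Cons sum.reindex[OF inj]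
    by (rule sum.cong) (auto simp del: prod.lessThan_Suc simp: prod.lessThan_Suc_shift)
  also have "\<dots> = (\<Sum>h<n. f 0 h) * (\<Sum>t\<in>index_set ns. \<Prod>x<length ns. f (Suc x) (t ! x))"
    by (simp add: sum.cartesian_product[symmetric] sum_product)
  also have "\<dots> = (\<Sum>h<n. f 0 h) * (\<Prod>x<length ns. \<Sum>v<ns ! x. f (Suc x) v)"
    using Cons.IH[of "\<lambda>x. f (Suc x)"] by simp
  also have "\<dots> = (\<Prod>x<length (n # ns). \<Sum>v<(n # ns) ! x. f x v)"
    by (simp del: prod.lessThan_Suc add: prod.lessThan_Suc_shift)
  finally show ?case .
qed

lemma prod_indicator_nat:
  "finite A \<Longrightarrow> (\<Prod>x\<in>A. if P x then 1 else (0::nat)) = (if \<forall>x\<in>A. P x then 1 else 0)"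
  by (cases "\<forall>x\<in>A. P x") (auto simp: prod_zero_iff)

lemma card_index_set_filter:
  "card {u \<in> index_set ns. \<forall>x<length ns. Q x (u ! x)} = (\<Prod>x<length ns. card {v. v < ns ! x \<and> Q x v})"
proof -
  have "card {u \<in> index_set ns. \<forall>x<length ns. Q x (u ! x)}
     = (\<Sum>u\<in>index_set ns. if \<forall>x<length ns. Q x (u ! x) then 1 else 0)"
    using sum.inter_filter[OF finite_index_set, of "\<lambda>_. 1::nat"] by simp
  also have "\<dots> = (\<Sum>u\<in>index_set ns. \<Prod>x<length ns. if Q x (u ! x) then 1 else 0)"
    by (rule sum.cong[OF refl], subst prod_indicator_nat) auto
  also have "\<dots> = (\<Prod>x<length ns. \<Sum>v<ns ! x. if Q x v then 1 else 0)"
    by (rule sum_index_set_prod)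
  also have "\<dots> = (\<Prod>x<length ns. card {v. v < ns ! x \<and> Q x v})"
  proof (rule prod.cong[OF refl])
    fix x
    have "{v. v < ns ! x \<and> Q x v} = {v\<in>{..<ns ! x}. Q x v}" by auto
    then show "(\<Sum>v<ns ! x. if Q x v then 1 else 0) = card {v. v < ns ! x \<and> Q x v}"
      using sum.inter_filter[of "{..<ns ! x}" "\<lambda>_. 1::nat" "Q x"] by simp
  qed
  finally show ?thesis .
qed

lemma prod_nth_prod_list: "(\<Prod>x<length ns. ns ! x) = prod_list (ns::nat list)"
  by (induction ns) (simp_all del: prod.lessThan_Suc add: prod.lessThan_Suc_shift)

lemma card_index_set: "card (index_set ns) = prod_list ns"
proof -
  have "card (index_set ns) = card {u \<in> index_set ns. \<forall>x<length ns. True}" by simp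
  also have "\<dots> = (\<Prod>x<length ns. ns ! x)" by (subst card_index_set_filter) simp
  also have "\<dots> = prod_list ns" by (rule prod_nth_prod_list)
  finally show ?thesis .
qed

lemma prod_if_complex:
  "finite A \<Longrightarrow> (\<Prod>x\<in>A. if P x then (of_nat (g x) :: complex) else 0) =
     (if \<forall>x\<in>A. P x then of_nat (\<Prod>x\<in>A. g x) else 0)"
  by (cases "\<forall>x\<in>A. P x") (auto simp: prod_zero_iff)

lemma ew_sum:
  assumes pos: "\<And>x. x < length ns \<Longrightarrow> 0 < ns ! x"
  shows "(\<Sum>l\<in>index_set ns. ew ns (\<lambda>x. m x * int (l ! x))) =
         (if \<forall>x<length ns. int (ns ! x) dvd m x then of_nat (prod_list ns) else 0)"
proof -
  have "(\<Sum>l\<in>index_set ns. ew ns (\<lambda>x. m x * int (l ! x)))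
     = (\<Sum>l\<in>index_set ns. \<Prod>x<length ns.
          (\<lambda>x v. exp (2 * of_real pi * \<i> * of_int (m x) * of_nat v / of_nat (ns ! x))) x (l ! x))"
    unfolding ew_def by (rule sum.cong[OF refl], rule prod.cong[OF refl]) (simp add: mult.assoc)
  also have "\<dots> = (\<Prod>x<length ns. \<Sum>v<ns ! x. exp (2 * of_real pi * \<i> * of_int (m x) * of_nat v / of_nat (ns ! x)))"
    by (rule sum_index_set_prod)
  also have "\<dots> = (\<Prod>x<length ns. if int (ns ! x) dvd m x then of_nat (ns ! x) else 0)"
    by (rule prod.cong[OF refl]) (simp add: geom_root pos)
  also have "\<dots> = (if \<forall>x<length ns. int (ns ! x) dvd m x then of_nat (prod_list ns) else 0)"
    by (subst prod_if_complex) (auto simp: prod_nth_prod_list)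
  finally show ?thesis .
qed

definition chi :: "nat list \<Rightarrow> nat list \<Rightarrow> nat list \<Rightarrow> complex" where
  "chi ns u l = ew ns (\<lambda>x. int (u ! x) * int (l ! x))"

lemma fourier_kron_chi:
  "u \<in> index_set ns \<Longrightarrow> l \<in> index_set ns \<Longrightarrow> fourier_kron ns u l = chi ns u l"
  unfolding fourier_kron_def chi_def ew_def by (simp add: mult.assoc)

lemma fourier_kron_out:
  "u \<notin> index_set ns \<or> l \<notin> index_set ns \<Longrightarrow> fourier_kron ns u l = 0"
  unfolding fourier_kron_def by auto

lemma chi_sym: "chi ns u l = chi ns l u"
  unfolding chi_def by (simp add: mult.commute)

lemma chi_nonzero: "chi ns u l \<noteq> 0"
  unfolding chi_def by (rule ew_nonzero)

lemma index_set_eq_iff: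
  assumes "u \<in> index_set ns" "v \<in> index_set ns"
  shows "(\<forall>x<length ns. int (ns ! x) dvd int (u ! x) - int (v ! x)) \<longleftrightarrow> u = v"
proof
  assume h: "\<forall>x<length ns. int (ns ! x) dvd int (u ! x) - int (v ! x)"
  show "u = v"
  proof (rule nth_equalityI)
    show "length u = length v" using assms by (simp add: index_set_def)
    fix x assume "x < length u"
    then have x: "x < length ns" using assms by (simp add: index_set_def)
    have "int (u ! x) mod int (ns ! x) = int (v ! x) mod int (ns ! x)"
      using h x by (simp add: mod_eq_dvd_iff)
    moreover have "u ! x < ns ! x" "v ! x < ns ! x" using assms x by (auto simp: index_set_def)
    ultimately show "u ! x = v ! x" by simp
  qed
qed simp

definition cs :: "nat list \<Rightarrow> nat list \<times> nat list \<Rightarrow> nat list \<times> nat list \<Rightarrow> real" where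
  "cs ns p q = Re (chi ns (fst p) (fst q) * chi ns (snd p) (snd q)) +
               Im (chi ns (fst p) (fst q) * chi ns (snd p) (snd q))"

lemma re_plus_im: "complex_of_real (Re z + Im z) = ((1 - \<i>) * z + (1 + \<i>) * cnj z) / 2"
  by (simp add: complex_eq_iff)

lemma cs_complex: "complex_of_real (cs ns p q) =
   ((1 - \<i>) * (chi ns (fst p) (fst q) * chi ns (snd p) (snd q)) +
    (1 + \<i>) * cnj (chi ns (fst p) (fst q) * chi ns (snd p) (snd q))) / 2"
  unfolding cs_def by (rule re_plus_im)

lemma cs_sym: "cs ns p q = cs ns q p"
  unfolding cs_def by (simp add: chi_sym)

lemma sum_pair_prod:
  "(\<Sum>q\<in>A \<times> B. g (fst q) * h (snd q)) = (\<Sum>i\<in>A. g i) * (\<Sum>l\<in>B. (h l :: complex))"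
  unfolding sum_product sum.cartesian_product by (simp add: case_prod_unfold)

lemma sum_lin4:
  "(\<Sum>q\<in>S. (\<alpha> * f q + \<beta> * g q + \<gamma> * h q + \<delta> * k q) / 4) =
   (\<alpha> * sum f S + \<beta> * sum g S + \<gamma> * sum h S + \<delta> * sum k S) / (4::complex)"
  by (simp add: sum.distrib sum_divide_distrib[symmetric] sum_distrib_left)

locale pos_ns =
  fixes ns :: "nat list"
  assumes pos: "\<And>x. x < length ns \<Longrightarrow> 0 < ns ! x"
begin

abbreviation "I \<equiv> index_set ns"
abbreviation "NN \<equiv> prod_list ns"

lemma NN_pos: "0 < NN"
  by (simp add: prod_nth_prod_list[symmetric] prod_pos pos)

lemma sum_chi_chi_real:
  "cnj (\<Sum>i\<in>I. chi ns u i * chi ns u' i) = (\<Sum>i\<in>I. chi ns u i * chi ns u' i)"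
proof -
  have "(\<Sum>i\<in>I. chi ns u i * chi ns u' i) = (\<Sum>i\<in>I. ew ns (\<lambda>x. (int (u ! x) + int (u' ! x)) * int (i ! x)))"
    unfolding chi_def by (rule sum.cong[OF refl]) (simp add: ew_mult algebra_simps)
  also have "\<dots> = (if \<forall>x<length ns. int (ns ! x) dvd int (u ! x) + int (u' ! x) then of_nat NN else 0)"
    by (rule ew_sum[OF pos])
  finally show ?thesis by simp
qed

lemma sum_chi_cnj:
  assumes "u \<in> I" "u' \<in> I"
  shows "(\<Sum>i\<in>I. chi ns u i * cnj (chi ns u' i)) = (if u = u' then of_nat NN else 0)"
proof -
  have "(\<Sum>i\<in>I. chi ns u i * cnj (chi ns u' i)) = (\<Sum>i\<in>I. ew ns (\<lambda>x. (int (u ! x) - int (u' ! x)) * int (i ! x)))"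
    unfolding chi_def by (rule sum.cong[OF refl]) (simp add: ew_mult ew_cnj algebra_simps)
  also have "\<dots> = (if \<forall>x<length ns. int (ns ! x) dvd int (u ! x) - int (u' ! x) then of_nat NN else 0)"
    by (rule ew_sum[OF pos])
  finally show ?thesis using index_set_eq_iff[OF assms] by simp
qed

lemma cs_orth:
  assumes p: "p \<in> I \<times> I" and p': "p' \<in> I \<times> I"
  shows "(\<Sum>q\<in>I \<times> I. cs ns p q * cs ns p' q) = (if p = p' then real NN ^ 2 else 0)"
proof -
  obtain u d where ud: "p = (u,d)" by force
  obtain u' d' where ud': "p' = (u',d')" by force
  have I: "u \<in> I" "d \<in> I" "u' \<in> I" "d' \<in> I" using p p' ud ud' by auto
  define z where "z q = chi ns u (fst q) * chi ns d (snd q)" for q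
  define z' where "z' q = chi ns u' (fst q) * chi ns d' (snd q)" for q
  define X where "X = (\<Sum>q\<in>I \<times> I. z q * z' q)"
  define Y where "Y = (\<Sum>q\<in>I \<times> I. z q * cnj (z' q))"
  have X: "cnj X = X"
  proof -
    have "X = (\<Sum>i\<in>I. chi ns u i * chi ns u' i) * (\<Sum>l\<in>I. chi ns d l * chi ns d' l)"
      unfolding X_def z_def z'_def by (subst sum_pair_prod[symmetric]) (simp add: algebra_simps)
    then show ?thesis using sum_chi_chi_real by simp
  qed
  have Y: "Y = (if p = p' then of_nat NN ^ 2 else 0)"
  proof -
    have "Y = (\<Sum>i\<in>I. chi ns u i * cnj (chi ns u' i)) * (\<Sum>l\<in>I. chi ns d l * cnj (chi ns d' l))"
      unfolding Y_def z_def z'_def by (subst sum_pair_prod[symmetric]) (simp add: algebra_simps)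
    then show ?thesis using sum_chi_cnj I ud ud' by (auto simp: power2_eq_square)
  qed
  have "complex_of_real (\<Sum>q\<in>I \<times> I. cs ns p q * cs ns p' q)
      = (\<Sum>q\<in>I \<times> I. ((1 - \<i>) * z q + (1 + \<i>) * cnj (z q)) / 2 * (((1 - \<i>) * z' q + (1 + \<i>) * cnj (z' q)) / 2))"
    by (simp add: cs_complex z_def z'_def ud ud')
  also have "\<dots> = (\<Sum>q\<in>I \<times> I. ((- 2 * \<i>) * (z q * z' q) + (2 * \<i>) * (cnj (z q) * cnj (z' q))
                 + 2 * (z q * cnj (z' q)) + 2 * (cnj (z q) * z' q)) / 4)"
    by (rule sum.cong[OF refl]) (simp add: field_simps power2_eq_square)
  also have "\<dots> = (- 2 * \<i> * X + 2 * \<i> * cnj X + 2 * Y + 2 * cnj Y) / 4"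
    unfolding sum_lin4 X_def Y_def by simp
  also have "\<dots> = Y" using X Y by (simp add: field_simps)
  finally have h: "complex_of_real (\<Sum>q\<in>I \<times> I. cs ns p q * cs ns p' q) = Y" .
  have "Y = complex_of_real (if p = p' then real NN ^ 2 else 0)" using Y by simp
  from trans[OF h this] show ?thesis by (simp only: of_real_eq_iff)
qed

end

context pos_ns begin

definition EE :: "nat list \<Rightarrow> nat list \<Rightarrow> nat list \<Rightarrow> complex" where
  "EE i j l = ew ns (\<lambda>x. (int (i ! x) - int (j ! x)) * int (l ! x))"

definition Cond :: "(nat list \<Rightarrow> nat list \<Rightarrow> real) \<Rightarrow> bool" where
  "Cond R \<longleftrightarrow> (\<forall>i\<in>I. \<forall>j\<in>I. (\<Sum>l\<in>I. complex_of_real (R i l - R j l) * EE i j l) = 0)"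

lemma V_EE: "i \<in> I \<Longrightarrow> j \<in> I \<Longrightarrow> l \<in> I \<Longrightarrow>
   fourier_kron ns i l * cnj (fourier_kron ns j l) = EE i j l"
  by (simp add: fourier_kron_chi chi_def EE_def ew_cnj ew_mult algebra_simps)

lemma cnj_EE: "cnj (EE j i l) = EE i j l"
  by (simp add: EE_def ew_cnj algebra_simps)

lemma anti_iff:
  fixes R :: "nat list \<Rightarrow> nat list \<Rightarrow> real"
  defines "W \<equiv> (\<lambda>i j. \<i> * complex_of_real (R i j) * fourier_kron ns i j)"
  shows "antihermitian_on I (mat_mult I W (mat_adj (fourier_kron ns))) \<longleftrightarrow> Cond R"
proof -
  have A: "mat_mult I W (mat_adj (fourier_kron ns)) i j = (\<Sum>l\<in>I. \<i> * complex_of_real (R i l) * EE i j l)"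
    if "i \<in> I" "j \<in> I" for i j
    unfolding mat_mult_def mat_adj_def W_def
    by (rule sum.cong[OF refl]) (simp add: V_EE[symmetric] that mult.assoc)
  have key: "(mat_mult I W (mat_adj (fourier_kron ns)) i j = - cnj (mat_mult I W (mat_adj (fourier_kron ns)) j i))
     \<longleftrightarrow> (\<Sum>l\<in>I. complex_of_real (R i l - R j l) * EE i j l) = 0"
    if "i \<in> I" "j \<in> I" for i j
  proof -
    have "- cnj (mat_mult I W (mat_adj (fourier_kron ns)) j i) = (\<Sum>l\<in>I. \<i> * complex_of_real (R j l) * EE i j l)"
      using that by (simp add: A cnj_EE sum_negf[symmetric])
    then have "(mat_mult I W (mat_adj (fourier_kron ns)) i j = - cnj (mat_mult I W (mat_adj (fourier_kron ns)) j i))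
       \<longleftrightarrow> (\<Sum>l\<in>I. \<i> * complex_of_real (R i l) * EE i j l) - (\<Sum>l\<in>I. \<i> * complex_of_real (R j l) * EE i j l) = 0"
      using that A by simp
    also have "(\<Sum>l\<in>I. \<i> * complex_of_real (R i l) * EE i j l) - (\<Sum>l\<in>I. \<i> * complex_of_real (R j l) * EE i j l)
       = \<i> * (\<Sum>l\<in>I. complex_of_real (R i l - R j l) * EE i j l)"
      by (simp add: sum_subtractf[symmetric] sum_distrib_left algebra_simps)
    finally show ?thesis by simp
  qed
  show ?thesis unfolding antihermitian_on_def Cond_def using key by blast
qed

lemma sum_cs_EE:
  assumes p: "p \<in> I \<times> I" and ij: "i \<in> I" "j \<in> I"
  shows "(\<Sum>l\<in>I. complex_of_real (cs ns p (r, l)) * EE i j l) =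
    ((1 - \<i>) * chi ns (fst p) r *
        (if \<forall>x<length ns. int (ns ! x) dvd int (snd p ! x) + int (i ! x) - int (j ! x) then of_nat NN else 0)
     + (1 + \<i>) * cnj (chi ns (fst p) r) *
        (if \<forall>x<length ns. int (ns ! x) dvd - int (snd p ! x) + int (i ! x) - int (j ! x) then of_nat NN else 0)) / 2"
proof -
  have s1: "(\<Sum>l\<in>I. chi ns (snd p) l * EE i j l) =
        (if \<forall>x<length ns. int (ns ! x) dvd int (snd p ! x) + int (i ! x) - int (j ! x) then of_nat NN else 0)"
  proof -
    have "(\<Sum>l\<in>I. chi ns (snd p) l * EE i j l) =
       (\<Sum>l\<in>I. ew ns (\<lambda>x. (int (snd p ! x) + int (i ! x) - int (j ! x)) * int (l ! x)))"
      by (rule sum.cong[OF refl]) (simp add: chi_def EE_def ew_mult algebra_simps)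
    then show ?thesis by (simp add: ew_sum[OF pos])
  qed
  have s2: "(\<Sum>l\<in>I. cnj (chi ns (snd p) l) * EE i j l) =
        (if \<forall>x<length ns. int (ns ! x) dvd - int (snd p ! x) + int (i ! x) - int (j ! x) then of_nat NN else 0)"
  proof -
    have "(\<Sum>l\<in>I. cnj (chi ns (snd p) l) * EE i j l) =
       (\<Sum>l\<in>I. ew ns (\<lambda>x. (- int (snd p ! x) + int (i ! x) - int (j ! x)) * int (l ! x)))"
      by (rule sum.cong[OF refl]) (simp add: chi_def EE_def ew_mult ew_cnj algebra_simps)
    then show ?thesis by (simp add: ew_sum[OF pos])
  qed
  have "(\<Sum>l\<in>I. complex_of_real (cs ns p (r, l)) * EE i j l) =
     (\<Sum>l\<in>I. ((1 - \<i>) * chi ns (fst p) r) * (chi ns (snd p) l * EE i j l) / 2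
              + ((1 + \<i>) * cnj (chi ns (fst p) r)) * (cnj (chi ns (snd p) l) * EE i j l) / 2)"
    by (rule sum.cong[OF refl]) (simp add: cs_complex field_simps)
  also have "\<dots> = ((1 - \<i>) * chi ns (fst p) r) * (\<Sum>l\<in>I. chi ns (snd p) l * EE i j l) / 2
              + ((1 + \<i>) * cnj (chi ns (fst p) r)) * (\<Sum>l\<in>I. cnj (chi ns (snd p) l) * EE i j l) / 2"
    by (simp add: sum.distrib sum_distrib_left sum_divide_distrib)
  finally show ?thesis by (simp add: s1 s2 add_divide_distrib)
qed

lemma cs_Cond:
  assumes p: "p \<in> I \<times> I" and one: "chi ns (fst p) (snd p) = 1"
  shows "Cond (\<lambda>i l. cs ns p (i, l))"
  unfolding Cond_def
proof (intro ballI)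
  fix i j assume ij: "i \<in> I" "j \<in> I"
  obtain u d where ud: "p = (u, d)" by force
  have c1: "chi ns u i = chi ns u j"
    if h: "\<forall>x<length ns. int (ns ! x) dvd int (d ! x) + int (i ! x) - int (j ! x)"
  proof -
    have "chi ns u j = ew ns (\<lambda>x. int (u ! x) * int (i ! x) + int (u ! x) * int (d ! x))"
      unfolding chi_def
    proof (rule ew_cong)
      fix x assume "x < length ns"
      then have "int (ns ! x) dvd int (u ! x) * (int (d ! x) + int (i ! x) - int (j ! x))"
        using h by simp
      then show "int (ns ! x) dvd int (u ! x) * int (j ! x) - (int (u ! x) * int (i ! x) + int (u ! x) * int (d ! x))"
      proof -
        have "int (u ! x) * int (j ! x) - (int (u ! x) * int (i ! x) + int (u ! x) * int (d ! x))
             = - (int (u ! x) * (int (d ! x) + int (i ! x) - int (j ! x)))" by (simp add: algebra_simps)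
        then show ?thesis using \<open>int (ns ! x) dvd int (u ! x) * (int (d ! x) + int (i ! x) - int (j ! x))\<close>
          by (simp only: dvd_minus_iff)
      qed
    qed
    also have "\<dots> = chi ns u i * chi ns u d" by (simp add: chi_def ew_mult)
    finally show ?thesis using one ud by simp
  qed
  have c2: "chi ns u i = chi ns u j"
    if h: "\<forall>x<length ns. int (ns ! x) dvd - int (d ! x) + int (i ! x) - int (j ! x)"
  proof -
    have "chi ns u i = ew ns (\<lambda>x. int (u ! x) * int (j ! x) + int (u ! x) * int (d ! x))"
      unfolding chi_def
    proof (rule ew_cong)
      fix x assume "x < length ns"
      then have "int (ns ! x) dvd int (u ! x) * (- int (d ! x) + int (i ! x) - int (j ! x))"
        using h by simp
      then show "int (ns ! x) dvd int (u ! x) * int (i ! x) - (int (u ! x) * int (j ! x) + int (u ! x) * int (d ! x))"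
        by (simp add: algebra_simps)
    qed
    also have "\<dots> = chi ns u j * chi ns u d" by (simp add: chi_def ew_mult)
    finally show ?thesis using one ud by simp
  qed
  have "(\<Sum>l\<in>I. complex_of_real (cs ns p (i, l) - cs ns p (j, l)) * EE i j l)
      = (\<Sum>l\<in>I. complex_of_real (cs ns p (i, l)) * EE i j l) - (\<Sum>l\<in>I. complex_of_real (cs ns p (j, l)) * EE i j l)"
    by (simp add: sum_subtractf[symmetric] algebra_simps)
  also have "\<dots> = 0"
    unfolding sum_cs_EE[OF p ij, of i] sum_cs_EE[OF p ij, of j] using c1 c2 ud by auto
  finally show "(\<Sum>l\<in>I. complex_of_real (cs ns p (i, l) - cs ns p (j, l)) * EE i j l) = 0" .
qed

end

lemma mod_sub_add: "(i::nat) < n \<Longrightarrow> d < n \<Longrightarrow> ((i + d) mod n + n - d) mod n = i"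
  by (cases "i + d < n") (auto simp: mod_if)

lemma mod_add_sub: "(j::nat) < n \<Longrightarrow> d < n \<Longrightarrow> ((j + n - d) mod n + d) mod n = j"
  by (cases "d \<le> j") (auto simp: mod_if)

lemma int_mod_diff_dvd: "int n dvd int ((i + d) mod n) - int i - int d"
proof -
  have "int ((i + d) mod n) = (int i + int d) mod int n" by (simp add: zmod_int)
  moreover have "int n dvd (int i + int d) mod int n - (int i + int d)"
    by (simp add: mod_eq_dvd_iff[symmetric])
  ultimately show ?thesis by (simp add: algebra_simps)
qed

context pos_ns begin

definition addl :: "nat list \<Rightarrow> nat list \<Rightarrow> nat list" where
  "addl i d = map (\<lambda>x. (i ! x + d ! x) mod ns ! x) [0..<length ns]"
definition subl :: "nat list \<Rightarrow> nat list \<Rightarrow> nat list" where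
  "subl j d = map (\<lambda>x. (j ! x + ns ! x - d ! x) mod ns ! x) [0..<length ns]"

lemma addl_in: "addl i d \<in> I"
  by (auto simp: addl_def index_set_def pos)
lemma subl_in: "subl i d \<in> I"
  by (auto simp: subl_def index_set_def pos)
lemma subl_addl: "i \<in> I \<Longrightarrow> d \<in> I \<Longrightarrow> subl (addl i d) d = i"
  by (rule nth_equalityI) (auto simp: addl_def subl_def index_set_def mod_sub_add)
lemma addl_subl: "j \<in> I \<Longrightarrow> d \<in> I \<Longrightarrow> addl (subl j d) d = j"
  by (rule nth_equalityI) (auto simp: addl_def subl_def index_set_def mod_add_sub)

lemma addl_dvd: "x < length ns \<Longrightarrow> int (ns ! x) dvd int (addl i d ! x) - int (i ! x) - int (d ! x)"
  by (simp add: addl_def int_mod_diff_dvd)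

lemma chi_addl: "chi ns u (addl i d) = chi ns u i * chi ns u d"
proof -
  have "chi ns u (addl i d) = ew ns (\<lambda>x. int (u ! x) * int (i ! x) + int (u ! x) * int (d ! x))"
    unfolding chi_def
  proof (rule ew_cong)
    fix x assume x: "x < length ns"
    have "int (ns ! x) dvd int (u ! x) * (int (addl i d ! x) - int (i ! x) - int (d ! x))"
      using addl_dvd[OF x] by simp
    then show "int (ns ! x) dvd int (u ! x) * int (addl i d ! x) - (int (u ! x) * int (i ! x) + int (u ! x) * int (d ! x))"
      by (simp add: algebra_simps)
  qed
  then show ?thesis by (simp add: chi_def ew_mult)
qed

lemma EE_addl: "EE (addl i d) i l = chi ns d l"
  unfolding EE_def chi_def
proof (rule ew_cong)
  fix x assume x: "x < length ns"
  have "int (ns ! x) dvd int (l ! x) * (int (addl i d ! x) - int (i ! x) - int (d ! x))"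
    using addl_dvd[OF x] by simp
  then show "int (ns ! x) dvd (int (addl i d ! x) - int (i ! x)) * int (l ! x) - int (d ! x) * int (l ! x)"
    by (simp add: algebra_simps)
qed

lemma T_zero:
  assumes C: "Cond R" and u: "u \<in> I" and d: "d \<in> I" and ne: "chi ns u d \<noteq> 1"
  shows "(\<Sum>q\<in>I \<times> I. complex_of_real (R (fst q) (snd q)) * (chi ns u (fst q) * chi ns d (snd q))) = 0"
proof -
  define A where "A i = (\<Sum>l\<in>I. complex_of_real (R i l) * chi ns d l)" for i
  have AA: "A (addl i d) = A i" if i: "i \<in> I" for i
  proof -
    have "(\<Sum>l\<in>I. complex_of_real (R (addl i d) l - R i l) * EE (addl i d) i l) = 0"
      using C addl_in i unfolding Cond_def by blast
    then have "(\<Sum>l\<in>I. complex_of_real (R (addl i d) l) * chi ns d l - complex_of_real (R i l) * chi ns d l) = 0"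
      by (simp add: EE_addl algebra_simps)
    then show ?thesis unfolding A_def sum_subtractf by simp
  qed
  define T where "T = (\<Sum>i\<in>I. chi ns u i * A i)"
  have T1: "(\<Sum>q\<in>I \<times> I. complex_of_real (R (fst q) (snd q)) * (chi ns u (fst q) * chi ns d (snd q))) = T"
    unfolding T_def A_def sum_distrib_left sum.cartesian_product
    by (simp add: case_prod_unfold algebra_simps)
  have "T = (\<Sum>i\<in>I. chi ns u (addl i d) * A (addl i d))"
    unfolding T_def
    by (rule sum.reindex_bij_witness[of _ "\<lambda>i. addl i d" "\<lambda>j. subl j d"])
       (auto simp: subl_addl addl_subl addl_in subl_in d)
  also have "\<dots> = chi ns u d * T"
    unfolding T_def sum_distrib_left
    by (rule sum.cong[OF refl]) (simp add: AA chi_addl)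
  finally have "T * (1 - chi ns u d) = 0" by (simp add: algebra_simps)
  then have "T = 0" using ne by simp
  then show ?thesis using T1 by simp
qed

lemma inner_zero:
  assumes C: "Cond R" and p: "p \<in> I \<times> I" and ne: "chi ns (fst p) (snd p) \<noteq> 1"
  shows "(\<Sum>q\<in>I \<times> I. R (fst q) (snd q) * cs ns p q) = 0"
proof -
  define z where "z q = chi ns (fst p) (fst q) * chi ns (snd p) (snd q)" for q
  define T where "T = (\<Sum>q\<in>I \<times> I. complex_of_real (R (fst q) (snd q)) * z q)"
  have T0: "T = 0" unfolding T_def z_def using T_zero[OF C _ _ ne] p by auto
  have "complex_of_real (\<Sum>q\<in>I \<times> I. R (fst q) (snd q) * cs ns p q)
     = (\<Sum>q\<in>I \<times> I. ((1 - \<i>) * (complex_of_real (R (fst q) (snd q)) * z q)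
           + (1 + \<i>) * cnj (complex_of_real (R (fst q) (snd q)) * z q)) / 2)"
    by (simp add: cs_complex z_def field_simps)
  also have "\<dots> = ((1 - \<i>) * T + (1 + \<i>) * cnj T) / 2"
    unfolding T_def by (simp add: sum.distrib sum_distrib_left sum_divide_distrib[symmetric])
  also have "\<dots> = 0" by (simp add: T0)
  finally show ?thesis by (simp only: of_real_eq_0_iff)
qed

end

interpretation rv: vector_space "rscale :: real \<Rightarrow> ('i \<Rightarrow> 'i \<Rightarrow> complex) \<Rightarrow> ('i \<Rightarrow> 'i \<Rightarrow> complex)"
  by unfold_locales (auto simp: rscale_def fun_eq_iff algebra_simps)

lemma fun_sum_apply: "(sum g A) x = sum (\<lambda>a. g a x) A"
  by (induction A rule: infinite_finite_induct) auto

lemma rscale_apply: "rscale c v i j = complex_of_real c * v i j"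
  by (simp add: rscale_def)

context pos_ns begin

abbreviation "V \<equiv> fourier_kron ns"

definition Ones :: "(nat list \<times> nat list) set" where
  "Ones = {p \<in> I \<times> I. chi ns (fst p) (snd p) = 1}"

definition bv :: "nat list \<times> nat list \<Rightarrow> nat list \<Rightarrow> nat list \<Rightarrow> complex" where
  "bv p = (\<lambda>i l. \<i> * complex_of_real (cs ns p (i, l)) * V i l)"

definition SS where
  "SS = {W. \<exists>R :: nat list \<Rightarrow> nat list \<Rightarrow> real.
              (\<forall>i j. (i \<notin> I \<or> j \<notin> I) \<longrightarrow> R i j = 0) \<and>
              W = (\<lambda>i j. \<i> * complex_of_real (R i j) * V i j) \<and>
              antihermitian_on I (mat_mult I W (mat_adj V))}"

lemma defect_SS: "undephased_defect I V = rv.dim SS"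
  unfolding undephased_defect_def SS_def ..

lemma finite_Ones: "finite Ones"
  unfolding Ones_def using finite_index_set by auto

lemma Cond_cong: "(\<And>i l. i \<in> I \<Longrightarrow> l \<in> I \<Longrightarrow> R i l = R' i l) \<Longrightarrow> Cond R = Cond R'"
  unfolding Cond_def by (intro ball_cong refl arg_cong[where f = "\<lambda>x. x = 0"] sum.cong) auto

lemma V_out: "i \<notin> I \<or> l \<notin> I \<Longrightarrow> V i l = 0"
  by (rule fourier_kron_out)

lemma B_sub: "bv ` Ones \<subseteq> SS"
proof
  fix w assume "w \<in> bv ` Ones"
  then obtain p where p: "p \<in> Ones" and w: "w = bv p" by auto
  define R where "R i l = (if i \<in> I \<and> l \<in> I then cs ns p (i, l) else 0)" for i l
  have wR: "w = (\<lambda>i j. \<i> * complex_of_real (R i j) * V i j)"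
    unfolding w bv_def R_def by (auto simp: fun_eq_iff V_out)
  have "Cond R"
  proof -
    have "Cond (\<lambda>i l. cs ns p (i, l))" using p by (intro cs_Cond) (auto simp: Ones_def)
    moreover have "Cond R = Cond (\<lambda>i l. cs ns p (i, l))" by (rule Cond_cong) (simp add: R_def)
    ultimately show ?thesis by simp
  qed
  then have "antihermitian_on I (mat_mult I w (mat_adj V))" using anti_iff[of R] wR by simp
  then show "w \<in> SS" unfolding SS_def using wR by (intro CollectI exI[of _ R]) (auto simp: R_def)
qed

lemma inversion:
  assumes q0: "q0 \<in> I \<times> I"
  shows "(\<Sum>p\<in>I \<times> I. (\<Sum>q\<in>I \<times> I. R (fst q) (snd q) * cs ns p q) * cs ns p q0)
        = real NN ^ 2 * R (fst q0) (snd q0)"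
proof -
  have "(\<Sum>p\<in>I \<times> I. (\<Sum>q\<in>I \<times> I. R (fst q) (snd q) * cs ns p q) * cs ns p q0)
      = (\<Sum>p\<in>I \<times> I. \<Sum>q\<in>I \<times> I. R (fst q) (snd q) * cs ns p q * cs ns p q0)"
    by (simp add: sum_distrib_right)
  also have "\<dots> = (\<Sum>q\<in>I \<times> I. \<Sum>p\<in>I \<times> I. R (fst q) (snd q) * cs ns p q * cs ns p q0)"
    by (rule sum.swap)
  also have "\<dots> = (\<Sum>q\<in>I \<times> I. R (fst q) (snd q) * (\<Sum>p\<in>I \<times> I. cs ns q p * cs ns q0 p))"
    by (simp add: sum_distrib_left cs_sym mult.assoc)
  also have "\<dots> = (\<Sum>q\<in>I \<times> I. R (fst q) (snd q) * (if q = q0 then real NN ^ 2 else 0))"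
    by (rule sum.cong[OF refl]) (simp add: cs_orth q0)
  also have "\<dots> = real NN ^ 2 * R (fst q0) (snd q0)"
    using q0 finite_index_set by (simp add: if_distrib cong: if_cong)
  finally show ?thesis .
qed

lemma SS_span: "SS \<subseteq> rv.span (bv ` Ones)"
proof
  fix W assume "W \<in> SS"
  then obtain R where R0: "\<forall>i j. (i \<notin> I \<or> j \<notin> I) \<longrightarrow> R i j = 0"
    and W: "W = (\<lambda>i j. \<i> * complex_of_real (R i j) * V i j)"
    and A: "antihermitian_on I (mat_mult I W (mat_adj V))" unfolding SS_def by blast
  have C: "Cond R" using A anti_iff[of R] W by simp
  define c where "c p = (\<Sum>q\<in>I \<times> I. R (fst q) (snd q) * cs ns p q) / real NN ^ 2" for p
  have NN0: "real NN \<noteq> 0" using NN_pos by simp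
  have Rrep: "R i l = (\<Sum>p\<in>Ones. c p * cs ns p (i, l))" if il: "i \<in> I" "l \<in> I" for i l
  proof -
    have "real NN ^ 2 * R i l = (\<Sum>p\<in>I \<times> I. (\<Sum>q\<in>I \<times> I. R (fst q) (snd q) * cs ns p q) * cs ns p (i, l))"
      using inversion[of "(i, l)" R] il by simp
    also have "\<dots> = (\<Sum>p\<in>Ones. (\<Sum>q\<in>I \<times> I. R (fst q) (snd q) * cs ns p q) * cs ns p (i, l))"
    proof (rule sum.mono_neutral_right)
      show "finite (I \<times> I)" using finite_index_set by simp
      show "Ones \<subseteq> I \<times> I" unfolding Ones_def by auto
      show "\<forall>p\<in>I \<times> I - Ones. (\<Sum>q\<in>I \<times> I. R (fst q) (snd q) * cs ns p q) * cs ns p (i, l) = 0"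
        using inner_zero[OF C] unfolding Ones_def by auto
    qed
    finally show ?thesis using NN0 unfolding c_def
      by (simp add: sum_divide_distrib[symmetric] field_simps)
  qed
  have "W = (\<Sum>p\<in>Ones. rscale (c p) (bv p))"
  proof (intro ext)
    fix i l
    show "W i l = (\<Sum>p\<in>Ones. rscale (c p) (bv p)) i l"
    proof (cases "i \<in> I \<and> l \<in> I")
      case True
      then show ?thesis unfolding W fun_sum_apply rscale_apply bv_def Rrep[OF True[THEN conjunct1] True[THEN conjunct2]]
        by (simp add: sum_distrib_left sum_distrib_right mult.assoc mult.left_commute)
    next
      case False
      then show ?thesis unfolding W fun_sum_apply rscale_apply bv_def by (simp add: V_out)
    qed
  qed
  also have "\<dots> \<in> rv.span (bv ` Ones)"
    by (intro rv.span_sum rv.span_scale rv.span_base) auto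
  finally show "W \<in> rv.span (bv ` Ones)" .
qed

lemma bv_eq_cs:
  assumes "bv p = bv p'" "q \<in> I \<times> I"
  shows "cs ns p q = cs ns p' q"
proof -
  obtain i l where q: "q = (i, l)" by force
  have "bv p i l = bv p' i l" using assms by simp
  then have "complex_of_real (cs ns p (i, l)) = complex_of_real (cs ns p' (i, l))"
    using assms(2) q unfolding bv_def by (simp add: fourier_kron_chi chi_nonzero)
  then show ?thesis using q by simp
qed

lemma bv_inj: "inj_on bv Ones"
proof (rule inj_onI)
  fix p p' assume p: "p \<in> Ones" and p': "p' \<in> Ones" and eq: "bv p = bv p'"
  have pI: "p \<in> I \<times> I" "p' \<in> I \<times> I" using p p' by (auto simp: Ones_def)
  have "(\<Sum>q\<in>I \<times> I. cs ns p q * cs ns p' q) = (\<Sum>q\<in>I \<times> I. cs ns p' q * cs ns p' q)"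
    using bv_eq_cs[OF eq] by (intro sum.cong) auto
  then have "(if p = p' then real NN ^ 2 else 0) = real NN ^ 2"
    using cs_orth[OF pI] cs_orth[OF pI(2) pI(2)] by simp
  then show "p = p'" using NN_pos by (auto split: if_splits)
qed

lemma B_indep: "rv.independent (bv ` Ones)"
proof (rule rv.independent_if_scalars_zero)
  show "finite (bv ` Ones)" using finite_Ones by simp
  fix f and x :: "nat list \<Rightarrow> nat list \<Rightarrow> complex"
  assume s: "(\<Sum>x\<in>bv ` Ones. rscale (f x) x) = 0" and x: "x \<in> bv ` Ones"
  then obtain p0 where p0: "p0 \<in> Ones" and xp: "x = bv p0" by auto
  define g where "g p = f (bv p)" for p
  have s2: "(\<Sum>p\<in>Ones. rscale (g p) (bv p)) = 0"
    using s unfolding sum.reindex[OF bv_inj] g_def by (simp add: comp_def)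
  have z: "(\<Sum>p\<in>Ones. g p * cs ns p q) = 0" if q: "q \<in> I \<times> I" for q
  proof -
    obtain i l where il: "q = (i, l)" by force
    have "(\<Sum>p\<in>Ones. rscale (g p) (bv p)) i l = 0" using s2 by simp
    then have "\<i> * V i l * complex_of_real (\<Sum>p\<in>Ones. g p * cs ns p q) = 0"
      unfolding fun_sum_apply rscale_apply bv_def il
      by (simp add: sum_distrib_left mult_ac)
    moreover have "V i l \<noteq> 0" using q il by (simp add: fourier_kron_chi chi_nonzero)
    ultimately have "complex_of_real (\<Sum>p\<in>Ones. g p * cs ns p q) = 0" by (simp add: of_real_sum)
    then show ?thesis by (simp only: of_real_eq_0_iff)
  qed
  have "0 = (\<Sum>q\<in>I \<times> I. (\<Sum>p\<in>Ones. g p * cs ns p q) * cs ns p0 q)"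
    using z by simp
  also have "\<dots> = (\<Sum>q\<in>I \<times> I. \<Sum>p\<in>Ones. g p * cs ns p q * cs ns p0 q)"
    by (simp add: sum_distrib_right)
  also have "\<dots> = (\<Sum>p\<in>Ones. \<Sum>q\<in>I \<times> I. g p * cs ns p q * cs ns p0 q)"
    by (rule sum.swap)
  also have "\<dots> = (\<Sum>p\<in>Ones. g p * (\<Sum>q\<in>I \<times> I. cs ns p q * cs ns p0 q))"
    by (simp add: sum_distrib_left mult.assoc)
  also have "\<dots> = (\<Sum>p\<in>Ones. g p * (if p = p0 then real NN ^ 2 else 0))"
    using p0 by (intro sum.cong refl) (auto simp: Ones_def cs_orth)
  also have "\<dots> = g p0 * real NN ^ 2"
    using p0 finite_Ones by (simp add: if_distrib cong: if_cong)
  finally show "f x = 0" using NN_pos xp g_def by simp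
qed

theorem defect_Ones: "undephased_defect I V = card Ones"
proof -
  have "rv.dim SS = card (bv ` Ones)"
    by (rule rv.dim_unique[OF B_sub SS_span B_indep refl])
  then show ?thesis using defect_SS card_image[OF bv_inj] by simp
qed

end

lemma ew_power: "ew ns f ^ t = ew ns (\<lambda>x. int t * f x)"
proof (induction t)
  case 0
  then show ?case by (simp add: ew_one)
next
  case (Suc t)
  then show ?case by (simp add: ew_mult algebra_simps)
qed

context pos_ns begin

definition Pd :: "nat list \<Rightarrow> nat \<Rightarrow> bool" where
  "Pd u t \<longleftrightarrow> (\<forall>x<length ns. ns ! x dvd t * u ! x)"

lemma Pd_NN: "Pd u NN"
  unfolding Pd_def prod_nth_prod_list[symmetric]
  by (auto intro!: dvd_mult2 dvd_prodI)

lemma ord_def': "elem_order ns u = (LEAST t. 0 < t \<and> Pd u t)"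
  unfolding elem_order_def Pd_def ..

lemma ord_props: "0 < elem_order ns u" "Pd u (elem_order ns u)"
  "\<And>t. 0 < t \<Longrightarrow> t < elem_order ns u \<Longrightarrow> \<not> Pd u t"
proof -
  have ex: "0 < NN \<and> Pd u NN" using NN_pos Pd_NN by simp
  show "0 < elem_order ns u" "Pd u (elem_order ns u)"
    unfolding ord_def' using LeastI[of "\<lambda>t. 0 < t \<and> Pd u t", OF ex] by auto
  show "\<And>t. 0 < t \<Longrightarrow> t < elem_order ns u \<Longrightarrow> \<not> Pd u t"
    unfolding ord_def' using not_less_Least by blast
qed

lemma Pd_iff_dvd: "Pd u D \<longleftrightarrow> elem_order ns u dvd D"
proof
  let ?o = "elem_order ns u"
  assume P: "Pd u D"
  have "Pd u (D mod ?o)"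
    unfolding Pd_def
  proof (intro allI impI)
    fix x assume x: "x < length ns"
    have a: "ns ! x dvd D * u ! x" using P x by (simp add: Pd_def)
    have b: "ns ! x dvd (D div ?o) * (?o * u ! x)" using ord_props(2) x by (simp add: Pd_def)
    have "D * u ! x = ((D div ?o) * ?o + D mod ?o) * u ! x" by (simp only: div_mult_mod_eq)
    also have "\<dots> = (D div ?o) * (?o * u ! x) + (D mod ?o) * u ! x" by (simp only: add_mult_distrib mult.assoc)
    finally have "D * u ! x = (D div ?o) * (?o * u ! x) + (D mod ?o) * u ! x" .
    then show "ns ! x dvd (D mod ?o) * u ! x" using a b by (metis dvd_add_right_iff)
  qed
  then have "D mod ?o = 0" using ord_props(3)[of "D mod ?o"] ord_props(1) by fastforce
  then show "?o dvd D" by auto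
next
  assume "elem_order ns u dvd D"
  then obtain k where "D = elem_order ns u * k" by auto
  then show "Pd u D" using ord_props(2) unfolding Pd_def
    by (metis dvd_mult2 mult.assoc mult.commute)
qed

lemma count_ones:
  "of_nat (card {d \<in> I. chi ns u d = 1} * elem_order ns u) = (of_nat NN :: complex)"
proof -
  let ?o = "elem_order ns u"
  have zo: "chi ns u d ^ ?o = 1" for d
    unfolding chi_def ew_power
  proof (rule ew_one)
    fix x assume "x < length ns"
    then have "ns ! x dvd ?o * u ! x" using ord_props(2) by (simp add: Pd_def)
    then have "int (ns ! x) dvd int ?o * int (u ! x)" by (metis int_dvd_int_iff of_nat_mult)
    then show "int (ns ! x) dvd int ?o * (int (u ! x) * int (d ! x))"
      by (metis dvd_mult2 mult.assoc)
  qed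
  have "(\<Sum>d\<in>I. \<Sum>t<?o. chi ns u d ^ t) = (\<Sum>d\<in>I. if chi ns u d = 1 then of_nat ?o else 0)"
    by (rule sum.cong[OF refl]) (simp add: sum_gp_strict zo)
  also have "\<dots> = of_nat (card {d \<in> I. chi ns u d = 1} * ?o)"
    by (simp add: sum.inter_filter[symmetric] finite_index_set)
  finally have 1: "(\<Sum>d\<in>I. \<Sum>t<?o. chi ns u d ^ t) = of_nat (card {d \<in> I. chi ns u d = 1} * ?o)" .
  have "(\<Sum>d\<in>I. \<Sum>t<?o. chi ns u d ^ t) = (\<Sum>t<?o. \<Sum>d\<in>I. ew ns (\<lambda>x. (int t * int (u ! x)) * int (d ! x)))"
    unfolding chi_def ew_power by (subst sum.swap) (simp add: mult.assoc)
  also have "\<dots> = (\<Sum>t<?o. if t = 0 then of_nat NN else 0)"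
  proof (rule sum.cong[OF refl])
    fix t assume t: "t \<in> {..<?o}"
    have "(\<forall>x<length ns. int (ns ! x) dvd int t * int (u ! x)) \<longleftrightarrow> Pd u t"
      unfolding Pd_def by (metis int_dvd_int_iff of_nat_mult)
    moreover have "Pd u t \<longleftrightarrow> t = 0" using ord_props(3)[of t] t by (auto simp: Pd_def)
    ultimately show "(\<Sum>d\<in>I. ew ns (\<lambda>x. (int t * int (u ! x)) * int (d ! x))) = (if t = 0 then of_nat NN else 0)"
      by (simp add: ew_sum[OF pos])
  qed
  also have "\<dots> = of_nat NN" using ord_props(1) by simp
  finally show ?thesis using 1 by simp
qed

lemma count_ones_nat: "card {d \<in> I. chi ns u d = 1} * elem_order ns u = NN"
  using count_ones[of u] by (simp only: of_nat_eq_iff)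

lemma card_Ones: "card Ones = (\<Sum>u\<in>I. card {d \<in> I. chi ns u d = 1})"
proof -
  have "Ones = Sigma I (\<lambda>u. {d \<in> I. chi ns u d = 1})" unfolding Ones_def by auto
  then show ?thesis using finite_index_set by (simp add: card_SigmaI)
qed

lemma defect_sum: "real (undephased_defect I V) = (\<Sum>u\<in>I. real NN / real (elem_order ns u))"
proof -
  have "real (card {d \<in> I. chi ns u d = 1}) = real NN / real (elem_order ns u)" for u
  proof -
    have "real (card {d \<in> I. chi ns u d = 1}) * real (elem_order ns u) = real NN"
      using count_ones_nat[of u] by (simp only: of_nat_mult[symmetric])
    then show ?thesis using ord_props(1)[of u] by (simp add: field_simps)
  qed
  then show ?thesis by (simp add: defect_Ones card_Ones)
qed

end

lemma card_multiples: "0 < q \<Longrightarrow> card {v. v < q * c \<and> q dvd v} = (c::nat)"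
proof -
  assume q: "0 < q"
  have "{v. v < q * c \<and> q dvd v} = (\<lambda>t. q * t) ` {..<c}"
    using q by (auto elim!: dvdE)
  moreover have "inj_on (\<lambda>t. q * t) {..<c}" using q by (auto simp: inj_on_def)
  ultimately show ?thesis by (simp add: card_image)
qed

lemma card_coord:
  assumes "prime (a::nat)"
  shows "card {v. v < a ^ k \<and> a ^ k dvd a ^ m * v} = a ^ min k m"
proof (cases "k \<le> m")
  case True
  then have "a ^ k dvd a ^ m * v" for v by (simp add: le_imp_power_dvd)
  then show ?thesis using True by simp
next
  case False
  have a0: "0 < a" using assms prime_gt_0_nat by blast
  have e: "a ^ k = a ^ m * a ^ (k - m)" using False by (simp flip: power_add)
  have "a ^ k dvd a ^ m * v \<longleftrightarrow> a ^ (k - m) dvd v" for v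
    unfolding e using a0 by (simp add: nat_mult_dvd_cancel1)
  then have "{v. v < a ^ k \<and> a ^ k dvd a ^ m * v} = {v. v < a ^ (k - m) * a ^ m \<and> a ^ (k - m) dvd v}"
    using e by (auto simp: mult.commute)
  then show ?thesis using False a0 by (simp add: card_multiples)
qed

definition Am :: "nat list \<Rightarrow> nat \<Rightarrow> nat" where
  "Am ks m = (\<Sum>x<length ks. min (ks ! x) m)"

locale pks =
  fixes a :: nat and ks :: "nat list"
  assumes prime: "prime a"
begin

lemma a_pos: "0 < a" using prime prime_gt_0_nat by blast
lemma a_ge2: "2 \<le> a" using prime prime_ge_2_nat by blast

sublocale pos_ns "map (\<lambda>k. a ^ k) ks"
  by unfold_locales (simp add: a_pos)

abbreviation "ns \<equiv> map (\<lambda>k. a ^ k) ks"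

lemma NN_eq: "NN = a ^ sum_list ks"
  by (induction ks) (simp_all add: power_add)

lemma card_Pd: "card {u \<in> I. Pd u (a ^ m)} = a ^ Am ks m"
proof -
  have "card {u \<in> I. Pd u (a ^ m)} = card {u \<in> I. \<forall>x<length ns. (\<lambda>x v. ns ! x dvd a ^ m * v) x (u ! x)}"
    unfolding Pd_def by simp
  also have "\<dots> = (\<Prod>x<length ns. card {v. v < ns ! x \<and> ns ! x dvd a ^ m * v})"
    by (rule card_index_set_filter)
  also have "\<dots> = (\<Prod>x<length ks. a ^ min (ks ! x) m)"
    by (rule prod.cong) (auto simp: card_coord[OF prime])
  also have "\<dots> = a ^ Am ks m" unfolding Am_def by (simp add: power_sum)
  finally show ?thesis .
qed

lemma ord_dvd_iff: "elem_order ns u dvd a ^ m \<longleftrightarrow> Pd u (a ^ m)"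
  using Pd_iff_dvd by simp

lemma ord_pow:
  assumes K: "\<forall>k\<in>set ks. k \<le> K"
  shows "\<exists>j\<le>K. elem_order ns u = a ^ j"
proof -
  have "Pd u (a ^ K)" unfolding Pd_def
  proof (intro allI impI)
    fix x assume "x < length ns"
    then have "ks ! x \<le> K" using K by simp
    then show "ns ! x dvd a ^ K * u ! x" using \<open>x < length ns\<close> by (simp add: le_imp_power_dvd)
  qed
  then have "elem_order ns u dvd a ^ K" using Pd_iff_dvd by simp
  then show ?thesis using divides_primepow_nat[OF prime] by auto
qed

definition nm :: "nat \<Rightarrow> nat" where
  "nm m = card {u \<in> I. elem_order ns u = a ^ m}"

lemma pow_dvd_iff: "a ^ i dvd a ^ m \<longleftrightarrow> i \<le> m"
  using dvd_power_iff_le[OF a_ge2] .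

lemma nm_0: "nm 0 = 1"
proof -
  have "{u \<in> I. elem_order ns u = a ^ 0} = {u \<in> I. Pd u (a ^ 0)}"
    using ord_dvd_iff[of _ 0] by auto
  then show ?thesis unfolding nm_def by (simp add: card_Pd Am_def del: power_0)
qed

lemma nm_Suc: "nm (Suc m) = a ^ Am ks (Suc m) - a ^ Am ks m"
proof -
  let ?A = "{u \<in> I. elem_order ns u = a ^ Suc m}"
  let ?B = "{u \<in> I. Pd u (a ^ m)}"
  have "{u \<in> I. Pd u (a ^ Suc m)} = ?A \<union> ?B"
  proof (rule set_eqI, rule iffI)
    fix u assume "u \<in> {u \<in> I. Pd u (a ^ Suc m)}"
    then have u: "u \<in> I" and P: "Pd u (a ^ Suc m)" by auto
    have d: "elem_order ns u dvd a ^ Suc m" using ord_dvd_iff[of u "Suc m"] P by blast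
    then obtain i where "i \<le> Suc m" "elem_order ns u = a ^ i" using divides_primepow_nat[OF prime, of _ "Suc m"] d by blast
    then show "u \<in> ?A \<union> ?B" using u ord_dvd_iff[of u m] pow_dvd_iff[of i m] by (cases "i = Suc m") auto
  next
    fix u assume "u \<in> ?A \<union> ?B"
    then show "u \<in> {u \<in> I. Pd u (a ^ Suc m)}"
      using ord_dvd_iff[of u "Suc m"] ord_dvd_iff[of u m] pow_dvd_iff[of m "Suc m"]
      by (auto intro: dvd_trans)
  qed
  moreover have "?A \<inter> ?B = {}"
  proof (rule ccontr)
    assume "?A \<inter> ?B \<noteq> {}"
    then obtain u where "elem_order ns u = a ^ Suc m" "Pd u (a ^ m)" by blast
    then have "a ^ Suc m dvd a ^ m" using ord_dvd_iff[of u m] by simp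
    then show False using pow_dvd_iff[of "Suc m" m] by simp
  qed
  moreover have "finite ?A" "finite ?B" using finite_index_set by auto
  ultimately have "a ^ Am ks (Suc m) = card ?A + a ^ Am ks m"
    using card_Pd[of "Suc m"] card_Pd[of m] by (simp add: card_Un_disjoint)
  then show ?thesis unfolding nm_def by simp
qed

lemma part_a:
  assumes K: "\<forall>k\<in>set ks. k \<le> K"
  shows "real (undephased_defect I V) = (\<Sum>m = 0..K. real NN / real a ^ m * real (nm m))"
proof -
  have "real (undephased_defect I V) = (\<Sum>u\<in>I. real NN / real (elem_order ns u))"
    by (rule defect_sum)
  also have "\<dots> = (\<Sum>y\<in>(\<lambda>m. a ^ m) ` {0..K}. \<Sum>u\<in>{u. u \<in> I \<and> elem_order ns u = y}. real NN / real (elem_order ns u))"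
  proof (rule sum.group[symmetric])
    show "finite I" "finite ((\<lambda>m. a ^ m) ` {0..K})" using finite_index_set by auto
    show "elem_order ns ` I \<subseteq> (\<lambda>m. a ^ m) ` {0..K}"
    proof
      fix y assume "y \<in> elem_order ns ` I"
      then obtain u where "y = elem_order ns u" by auto
      moreover obtain j where "j \<le> K" "elem_order ns u = a ^ j" using ord_pow[OF K] by blast
      ultimately show "y \<in> (\<lambda>m. a ^ m) ` {0..K}" by auto
    qed
  qed
  also have "\<dots> = (\<Sum>m = 0..K. \<Sum>u\<in>{u. u \<in> I \<and> elem_order ns u = a ^ m}. real NN / real (elem_order ns u))"
  proof (rule sum.reindex_cong[OF _ refl])
    show "inj_on (\<lambda>m. a ^ m) {0..K}" using a_ge2 by (auto simp: inj_on_def power_inject_exp)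
  qed simp
  also have "\<dots> = (\<Sum>m = 0..K. real NN / real a ^ m * real (nm m))"
    unfolding nm_def by (rule sum.cong[OF refl]) simp
  finally show ?thesis .
qed

end

lemma powi_nat_diff: "x \<noteq> 0 \<Longrightarrow> (x::real) powi (- int q + int p) = x ^ p / x ^ q"
proof -
  assume x: "x \<noteq> 0"
  have "- int q + int p = int p - int q" by simp
  then show ?thesis using power_int_diff[of x "int p" "int q"] x by simp
qed

lemma tele:
  fixes a :: real and g h :: "nat \<Rightarrow> real"
  assumes a: "a \<noteq> 0" and h0: "h 0 = 1" and g0: "g 0 = 1"
    and hS: "\<And>m. h (Suc m) = g (Suc m) - g m / a"
  shows "(\<Sum>m = 0..K. h m) = 1 / a * ((a - 1) * (1 + (\<Sum>m = 1..K. g m)) + g K)"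
proof (induction K)
  case 0
  then show ?case using a h0 g0 by (simp add: field_simps)
next
  case (Suc K)
  have "(\<Sum>m = 0..Suc K. h m) = (\<Sum>m = 0..K. h m) + h (Suc K)" by simp
  also have "\<dots> = 1 / a * ((a - 1) * (1 + (\<Sum>m = 1..K. g m)) + g K) + (g (Suc K) - g K / a)"
    using Suc hS by simp
  also have "\<dots> = 1 / a * ((a - 1) * (1 + (\<Sum>m = 1..Suc K. g m)) + g (Suc K))"
    using a by (simp add: field_simps)
  finally show ?case .
qed

lemma nest_sum:
  fixes x :: real
  assumes "x \<noteq> 0"
  shows "nest x (map e [j..<j + n]) = 1 + (\<Sum>m = j..<j + n. x powi (\<Sum>l = j..m. e l))"
proof (induction n arbitrary: j)
  case 0
  then show ?case by simp
next
  case (Suc n)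
  have l: "[j..<j + Suc n] = j # [Suc j..<Suc j + n]" by (simp add: upt_rec)
  have s1: "{j..<j + Suc n} = insert j {Suc j..<Suc j + n}" by auto
  have s2: "(\<Sum>l = j..m. e l) = e j + (\<Sum>l = Suc j..m. e l)" if "Suc j \<le> m" for m
    using that by (simp add: sum.atLeast_Suc_atMost)
  have "nest x (map e [j..<j + Suc n]) = 1 + x powi e j * (1 + (\<Sum>m = Suc j..<Suc j + n. x powi (\<Sum>l = Suc j..m. e l)))"
    unfolding l using Suc.IH[of "Suc j"] by simp
  also have "\<dots> = 1 + (x powi e j + (\<Sum>m = Suc j..<Suc j + n. x powi (e j + (\<Sum>l = Suc j..m. e l))))"
    using assms by (simp add: distrib_left sum_distrib_left power_int_add)
  also have "(\<Sum>m = Suc j..<Suc j + n. x powi (e j + (\<Sum>l = Suc j..m. e l))) = (\<Sum>m = Suc j..<Suc j + n. x powi (\<Sum>l = j..m. e l))"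
    by (rule sum.cong[OF refl]) (simp add: s2)
  also have "1 + (x powi e j + (\<Sum>m = Suc j..<Suc j + n. x powi (\<Sum>l = j..m. e l))) = 1 + (\<Sum>m = j..<j + Suc n. x powi (\<Sum>l = j..m. e l))"
    unfolding s1 by simp
  finally show ?case .
qed



lemma card_split: "card {x. x < (s::nat) \<and> P x} + card {x. x < s \<and> \<not> P x} = s"
proof -
  have "{x. x < s \<and> P x} \<union> {x. x < s \<and> \<not> P x} = {..<s}" by auto
  moreover have "{x. x < s \<and> P x} \<inter> {x. x < s \<and> \<not> P x} = {}" by auto
  ultimately show ?thesis using card_Un_disjoint[of "{x. x < s \<and> P x}" "{x. x < s \<and> \<not> P x}"] by simp
qed

lemma card_as_sum: "card {x. x < (s::nat) \<and> P x} = (\<Sum>x<s. if P x then 1 else 0)"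
proof -
  have "{x. x < s \<and> P x} = {x \<in> {..<s}. P x}" by auto
  moreover have "(\<Sum>x<s. if P x then 1 else 0) = (\<Sum>x\<in>{x \<in> {..<s}. P x}. 1::nat)"
    using sum.inter_filter[of "{..<s}" "\<lambda>_. 1::nat" P] by simp
  ultimately show ?thesis by simp
qed

lemma Am_Suc: "Am ks (Suc m) = Am ks m + card {x. x < length ks \<and> m < ks ! x}"
proof -
  have "Am ks (Suc m) = (\<Sum>x<length ks. min (ks ! x) m + (if m < ks ! x then 1 else 0))"
    unfolding Am_def by (rule sum.cong) auto
  then show ?thesis unfolding Am_def card_as_sum by (simp add: sum.distrib)
qed

lemma Am_mono: "m \<le> m' \<Longrightarrow> Am ks m \<le> Am ks m'"
  unfolding Am_def by (intro sum_mono) auto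

lemma Kcount_le: "Kcount ks l \<le> length ks"
  unfolding Kcount_def by (rule order.trans[OF card_mono[of "{..<length ks}"]]) auto

lemma s_minus_Kcount: "length ks - Kcount ks (Suc m) = card {x. x < length ks \<and> m < ks ! x}"
  using card_split[of "length ks" "\<lambda>x. ks ! x < Suc m"] unfolding Kcount_def
  by (simp add: not_less_eq)

lemma Kcount_sum: "int (length ks) * int m - (\<Sum>l = 1..m. int (Kcount ks l) + 1) = int (Am ks m) - int m"
proof (induction m)
  case 0
  then show ?case by (simp add: Am_def)
next
  case (Suc m)
  have "int (length ks) * int (Suc m) - (\<Sum>l = 1..Suc m. int (Kcount ks l) + 1)
       = (int (length ks) * int m - (\<Sum>l = 1..m. int (Kcount ks l) + 1)) + (int (length ks) - int (Kcount ks (Suc m)) - 1)"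
    by (simp add: algebra_simps)
  also have "int (length ks) - int (Kcount ks (Suc m)) = int (card {x. x < length ks \<and> m < ks ! x})"
    using s_minus_Kcount[of ks m] Kcount_le[of ks "Suc m"] by simp
  finally show ?case using Suc by (simp add: Am_Suc)
qed

lemma Am_kmax: "\<forall>k\<in>set ks. k \<le> K \<Longrightarrow> Am ks K = sum_list ks"
  unfolding Am_def sum_list_sum_nth atLeast0LessThan by (rule sum.cong) auto

lemma Am_int: "(\<Sum>x<length ks. int (min (ks ! x) m)) = int (Am ks m)"
  unfolding Am_def by simp

context pks begin

lemma part_b_gen:
  assumes K: "\<forall>k\<in>set ks. k \<le> K"
  shows "real (undephased_defect I V) = real NN / real a *
        ((real a - 1) * (1 + (\<Sum>m = 1..K. real a powi (- int m + int (Am ks m))))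
         + real a powi (- int K + int (Am ks K)))"
proof -
  define g where "g m = real a powi (- int m + int (Am ks m))" for m
  define h where "h m = real (nm m) / real a ^ m" for m
  have a0: "real a \<noteq> 0" using a_pos by simp
  have g: "g m = real a ^ Am ks m / real a ^ m" for m
    unfolding g_def using a0 by (rule powi_nat_diff)
  have "(\<Sum>m = 0..K. h m) = 1 / real a * ((real a - 1) * (1 + (\<Sum>m = 1..K. g m)) + g K)"
  proof (rule tele[OF a0])
    show "h 0 = 1" by (simp add: h_def nm_0)
    show "g 0 = 1" by (simp add: g Am_def)
    fix m
    have "a ^ Am ks m \<le> a ^ Am ks (Suc m)" using a_pos Am_mono[of m "Suc m" ks] by (simp add: power_increasing)
    then have "real (nm (Suc m)) = real a ^ Am ks (Suc m) - real a ^ Am ks m"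
      by (simp add: nm_Suc of_nat_diff)
    then show "h (Suc m) = g (Suc m) - g m / real a"
      unfolding h_def g using a0 by (simp add: field_simps)
  qed
  moreover have "real (undephased_defect I V) = real NN * (\<Sum>m = 0..K. h m)"
    unfolding part_a[OF K] h_def by (simp add: sum_distrib_left)
  ultimately show ?thesis unfolding g_def by simp
qed

end

locale kstr =
  fixes ks :: "nat list"
  assumes ne: "ks \<noteq> []" and kpos: "0 < Max (set ks)"
begin

abbreviation "kmax \<equiv> Max (set ks)"
abbreviation "s \<equiv> length ks"
abbreviation "r \<equiv> rnum ks"
abbreviation "CS \<equiv> {k \<in> set ks. 0 < k}"
abbreviation "LL \<equiv> sorted_list_of_set CS"

lemma fin_CS: "finite CS" by simp
lemma len_LL: "length LL = r" unfolding rnum_def by simp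
lemma set_LL: "set LL = CS" by simp
lemma strict_LL: "sorted_wrt (<) LL" by simp

lemma kmax_in: "kmax \<in> set ks" using ne by simp
lemma le_kmax: "k \<in> set ks \<Longrightarrow> k \<le> kmax" by simp
lemma nth_le_kmax: "x < s \<Longrightarrow> ks ! x \<le> kmax" by simp

lemma cval_pos_in: "1 \<le> y \<Longrightarrow> y \<le> r \<Longrightarrow> cval ks y \<in> set ks \<and> 0 < cval ks y"
proof -
  assume y: "1 \<le> y" "y \<le> r"
  then have "LL ! (y - 1) \<in> set LL" using len_LL by (intro nth_mem) simp
  then show ?thesis using y unfolding cval_def by simp
qed

lemma cval_mono: "y < y' \<Longrightarrow> y' \<le> r \<Longrightarrow> cval ks y < cval ks y'"
proof -
  assume yy: "y < y'" "y' \<le> r"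
  show ?thesis
  proof (cases "y = 0")
    case True
    then show ?thesis using cval_pos_in[of y'] yy by (simp add: cval_def)
  next
    case False
    have "LL ! (y - 1) < LL ! (y' - 1)"
      using sorted_wrt_nth_less[OF strict_LL, of "y - 1" "y' - 1"] yy False len_LL by simp
    then show ?thesis using False yy by (simp add: cval_def)
  qed
qed

lemma cval_mono_le: "y \<le> y' \<Longrightarrow> y' \<le> r \<Longrightarrow> cval ks y \<le> cval ks y'"
  using cval_mono[of y y'] by (cases "y = y'") auto

lemma cval_inj: "y \<le> r \<Longrightarrow> y' \<le> r \<Longrightarrow> cval ks y = cval ks y' \<Longrightarrow> y = y'"
  using cval_mono[of y y'] cval_mono[of y' y] by (cases y y' rule: linorder_cases) auto

lemma cval_surj: "k \<in> set ks \<Longrightarrow> 0 < k \<Longrightarrow> \<exists>y. 1 \<le> y \<and> y \<le> r \<and> cval ks y = k"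
proof -
  assume "k \<in> set ks" "0 < k"
  then have "k \<in> set LL" by (simp only: set_LL) simp
  then obtain i where i: "i < length LL" "LL ! i = k" by (metis in_set_conv_nth)
  then show ?thesis using len_LL by (intro exI[of _ "Suc i"]) (simp add: cval_def)
qed

lemma r_pos: "1 \<le> r"
proof -
  have "kmax \<in> CS" using kmax_in kpos by simp
  then have "CS \<noteq> {}" by auto
  then show ?thesis unfolding rnum_def by (simp add: Suc_le_eq card_gt_0_iff)
qed

lemma cval_r: "cval ks r = kmax"
proof -
  obtain y where y: "1 \<le> y" "y \<le> r" "cval ks y = kmax" using cval_surj[OF kmax_in kpos] by blast
  have "cval ks y \<le> cval ks r" using cval_mono_le[OF y(2)] by simp
  moreover have "cval ks r \<le> kmax" using cval_pos_in[of r] r_pos by simp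
  ultimately show ?thesis using y by simp
qed

lemma no_gap:
  assumes y: "1 \<le> y" "y \<le> r" and k: "k \<in> set ks" and lt: "cval ks (y - 1) < k" "k < cval ks y"
  shows False
proof -
  have "0 < k" using lt by simp
  then obtain y' where y': "1 \<le> y'" "y' \<le> r" "cval ks y' = k" using cval_surj k by blast
  have "y - 1 < y'"
  proof (rule ccontr)
    assume "\<not> y - 1 < y'"
    then have "cval ks y' \<le> cval ks (y - 1)" using cval_mono_le[of y' "y - 1"] y by simp
    then show False using lt y' by simp
  qed
  moreover have "y' < y"
  proof (rule ccontr)
    assume "\<not> y' < y"
    then have "cval ks y \<le> cval ks y'" using cval_mono_le[of y y'] y' by simp
    then show False using lt y' by simp
  qed
  ultimately show False by simp
qed

lemma gap_iff: "1 \<le> y \<Longrightarrow> y \<le> r \<Longrightarrow> k \<in> set ks \<Longrightarrow> (k < cval ks y \<longleftrightarrow> k \<le> cval ks (y - 1))"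
  using no_gap[of y k] cval_mono[of "y - 1" y] by fastforce

lemma gap_iff2: "1 \<le> y \<Longrightarrow> y \<le> r \<Longrightarrow> k \<in> set ks \<Longrightarrow> (cval ks (y - 1) < k \<longleftrightarrow> cval ks y \<le> k)"
  using gap_iff[of y k] by auto

lemma cval_r1: "cval ks (r - 1) < kmax"
  using cval_mono[of "r - 1" r] r_pos cval_r by simp

lemma top_iff: "k \<in> set ks \<Longrightarrow> (cval ks (r - 1) < k \<longleftrightarrow> k = kmax)"
proof -
  assume k: "k \<in> set ks"
  have "cval ks (r - 1) < k \<longleftrightarrow> kmax \<le> k" using gap_iff2[of r k] r_pos cval_r k by simp
  then show ?thesis using le_kmax[OF k] cval_r1 by auto
qed

definition GG :: "nat \<Rightarrow> nat" where
  "GG y = card {x. x < s \<and> cval ks (y - 1) < ks ! x}"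

lemma count_kmax: "count (mset ks) kmax = card {x. x < s \<and> ks ! x = kmax}"
  by (simp add: count_mset count_list_eq_length_filter length_filter_conv_card eq_commute)

lemma GG_r: "GG r = count (mset ks) kmax"
  unfolding GG_def count_kmax using top_iff cval_r1 by (intro arg_cong[where f = card]) auto

lemma Kcount_beta: "1 \<le> y \<Longrightarrow> y \<le> r \<Longrightarrow> int s - int (Kcount ks (cval ks y)) = int (GG y)"
proof -
  assume y: "1 \<le> y" "y \<le> r"
  have "Kcount ks (cval ks y) = card {x. x < s \<and> \<not> cval ks (y - 1) < ks ! x}"
    unfolding Kcount_def using gap_iff[OF y] by (intro arg_cong[where f = card]) auto
  then show ?thesis using card_split[of s "\<lambda>x. cval ks (y - 1) < ks ! x"] unfolding GG_def by simp
qed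

lemma mu_GG: "1 \<le> y \<Longrightarrow> y \<le> r \<Longrightarrow> mu ks (cval ks y) = int (GG y) - 1"
  unfolding mu_def using Kcount_beta by simp

lemma card_ge1: "x0 < s \<Longrightarrow> P x0 \<Longrightarrow> 1 \<le> card {x. x < (s::nat) \<and> P x}"
proof -
  assume h: "x0 < s" "P x0"
  have "{x0} \<subseteq> {x. x < s \<and> P x}" using h by auto
  then have "card {x0} \<le> card {x. x < s \<and> P x}" by (intro card_mono) auto
  then show ?thesis by simp
qed

lemma card_ge2: "x0 < s \<Longrightarrow> P x0 \<Longrightarrow> x1 < s \<Longrightarrow> P x1 \<Longrightarrow> x0 \<noteq> x1 \<Longrightarrow> 2 \<le> card {x. x < (s::nat) \<and> P x}"
proof -
  assume h: "x0 < s" "P x0" "x1 < s" "P x1" "x0 \<noteq> x1"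
  have "{x0, x1} \<subseteq> {x. x < s \<and> P x}" using h by auto
  then have "card {x0, x1} \<le> card {x. x < s \<and> P x}" by (intro card_mono) auto
  then show ?thesis using h by simp
qed

lemma GG_ge1: "1 \<le> y \<Longrightarrow> y \<le> r \<Longrightarrow> 1 \<le> GG y"
proof -
  assume y: "1 \<le> y" "y \<le> r"
  obtain x0 where "x0 < s" "ks ! x0 = cval ks y" using cval_pos_in[OF y] by (auto simp: in_set_conv_nth)
  then show ?thesis unfolding GG_def using cval_mono[of "y - 1" y] y by (intro card_ge1[of x0]) auto
qed

lemma GG_ge2: "1 \<le> y \<Longrightarrow> y < r \<Longrightarrow> 2 \<le> GG y"
proof -
  assume y: "1 \<le> y" "y < r"
  obtain x0 where x0: "x0 < s" "ks ! x0 = cval ks y" using cval_pos_in[of y] y by (auto simp: in_set_conv_nth)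
  obtain x1 where x1: "x1 < s" "ks ! x1 = kmax" using kmax_in by (auto simp: in_set_conv_nth)
  have "cval ks y < kmax" using cval_mono[of y r] y cval_r by simp
  then have "x0 \<noteq> x1" using x0 x1 by auto
  moreover have "cval ks (y - 1) < cval ks y" using cval_mono[of "y - 1" y] y by simp
  ultimately show ?thesis unfolding GG_def using x0 x1 \<open>cval ks y < kmax\<close>
    by (intro card_ge2[of x0 _ x1]) auto
qed

lemma mu_zero_iff: "1 \<le> y \<Longrightarrow> y \<le> r \<Longrightarrow> (mu ks (cval ks y) = 0 \<longleftrightarrow> y = r \<and> count (mset ks) kmax = 1)"
proof -
  assume y: "1 \<le> y" "y \<le> r"
  show ?thesis
  proof (cases "y = r")
    case True
    then show ?thesis using mu_GG[OF y] GG_r by simp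
  next
    case False
    then show ?thesis using mu_GG[OF y] GG_ge2[of y] y by simp
  qed
qed

definition sle :: "nat \<Rightarrow> nat" where "sle \<alpha> = sum_le ks \<alpha>"

lemma Am_block:
  assumes y: "1 \<le> y" "y \<le> r" and m: "cval ks (y - 1) \<le> m" "m \<le> cval ks y"
  shows "Am ks m = sum_le ks (cval ks (y - 1)) + m * GG y"
proof -
  let ?al = "cval ks (y - 1)"
  have "Am ks m = (\<Sum>x<s. if ks ! x \<le> ?al then ks ! x else m)"
    unfolding Am_def
  proof (rule sum.cong[OF refl])
    fix x assume "x \<in> {..<s}"
    then have "ks ! x \<in> set ks" by simp
    then show "min (ks ! x) m = (if ks ! x \<le> ?al then ks ! x else m)"
      using gap_iff2[OF y, of "ks ! x"] m by auto
  qed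
  also have "\<dots> = (\<Sum>x\<in>{..<s} \<inter> {x. ks ! x \<le> ?al}. ks ! x) + (\<Sum>x\<in>{..<s} \<inter> - {x. ks ! x \<le> ?al}. m)"
    by (rule sum.If_cases) simp
  also have "{..<s} \<inter> {x. ks ! x \<le> ?al} = {x. x < s \<and> ks ! x \<le> ?al}" by auto
  also have "{..<s} \<inter> - {x. ks ! x \<le> ?al} = {x. x < s \<and> ?al < ks ! x}" by auto
  finally show ?thesis unfolding sum_le_def GG_def by (simp add: mult.commute)
qed

end

lemma card_ge1': "x0 < s \<Longrightarrow> P x0 \<Longrightarrow> 1 \<le> card {x. x < (s::nat) \<and> P x}"
proof -
  assume h: "x0 < s" "P x0"
  have "{x0} \<subseteq> {x. x < s \<and> P x}" using h by auto
  then have "card {x0} \<le> card {x. x < s \<and> P x}" by (intro card_mono) auto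
  then show ?thesis by simp
qed

lemma degree_geom:
  assumes "1 \<le> n"
  shows "degree (\<Sum>d<n. monom (1::real) (\<mu> * d)) = \<mu> * (n - 1)"
    and "(\<Sum>d<n. monom (1::real) (\<mu> * d)) \<noteq> 0"
proof -
  let ?q = "\<Sum>d<n. monom (1::real) (\<mu> * d)"
  have c: "coeff ?q j = real (card {d. d < n \<and> \<mu> * d = j})" for j
  proof -
    have "coeff ?q j = (\<Sum>d<n. if \<mu> * d = j then 1 else 0)" by (simp add: coeff_sum coeff_monom)
    also have "\<dots> = real (\<Sum>d<n. if \<mu> * d = j then 1 else 0)" unfolding of_nat_sum
      by (rule sum.cong[OF refl]) simp
    also have "(\<Sum>d<n. if \<mu> * d = j then 1 else (0::nat)) = card {d. d < n \<and> \<mu> * d = j}"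
      using card_as_sum[of n "\<lambda>d. \<mu> * d = j"] by simp
    finally show ?thesis .
  qed
  have top: "coeff ?q (\<mu> * (n - 1)) \<noteq> 0"
  proof -
    have "1 \<le> card {d. d < n \<and> \<mu> * d = \<mu> * (n - 1)}"
      using assms by (intro card_ge1'[of "n - 1"]) auto
    then have "card {d. d < n \<and> \<mu> * d = \<mu> * (n - 1)} \<noteq> 0" by linarith
    then show ?thesis by (metis c of_nat_eq_0_iff)
  qed
  show "?q \<noteq> 0" using top by auto
  have "degree ?q \<le> \<mu> * (n - 1)"
  proof (rule degree_le, intro allI impI)
    fix j assume j: "\<mu> * (n - 1) < j"
    have "{d. d < n \<and> \<mu> * d = j} = {}"
    proof (rule ccontr)
      assume "{d. d < n \<and> \<mu> * d = j} \<noteq> {}"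
      then obtain d where "d < n" "\<mu> * d = j" by auto
      then have "\<mu> * d \<le> \<mu> * (n - 1)" by (intro mult_le_mono2) simp
      then show False using j \<open>\<mu> * d = j\<close> by simp
    qed
    then show "coeff ?q j = 0" using c by simp
  qed
  moreover have "\<mu> * (n - 1) \<le> degree ?q" using top by (rule le_degree)
  ultimately show "degree ?q = \<mu> * (n - 1)" by simp
qed

lemma poly_Ppoly: "poly (Ppoly ks \<alpha> \<beta>) x =
   x ^ (sum_le ks \<alpha> + nat (mu ks \<beta>) * (\<alpha> + 1)) * (\<Sum>d<\<beta> - \<alpha>. x ^ (nat (mu ks \<beta>) * d))"
  unfolding Ppoly_def by (simp add: poly_sum poly_monom)

lemma degree_Ppoly: "\<alpha> < \<beta> \<Longrightarrow> degree (Ppoly ks \<alpha> \<beta>) = sum_le ks \<alpha> + nat (mu ks \<beta>) * \<beta>"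
proof -
  assume ab: "\<alpha> < \<beta>"
  let ?m = "nat (mu ks \<beta>)"
  have n1: "1 \<le> \<beta> - \<alpha>" using ab by simp
  have "degree (Ppoly ks \<alpha> \<beta>) = (sum_le ks \<alpha> + ?m * (\<alpha> + 1)) + ?m * (\<beta> - \<alpha> - 1)"
    unfolding Ppoly_def
    by (subst degree_mult_eq) (simp_all add: degree_monom_eq degree_geom[OF n1])
  also have "\<dots> = sum_le ks \<alpha> + ?m * \<beta>"
  proof -
    have "?m * (\<alpha> + 1) + ?m * (\<beta> - \<alpha> - 1) = ?m * ((\<alpha> + 1) + (\<beta> - \<alpha> - 1))"
      by (simp only: distrib_left)
    also have "(\<alpha> + 1) + (\<beta> - \<alpha> - 1) = \<beta>" using ab by simp
    finally have "?m * (\<alpha> + 1) + ?m * (\<beta> - \<alpha> - 1) = ?m * \<beta>" .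
    then show ?thesis by simp
  qed
  finally show ?thesis .
qed

context kstr begin

lemma nat_mu: "1 \<le> y \<Longrightarrow> y \<le> r \<Longrightarrow> nat (mu ks (cval ks y)) = GG y - 1"
  using mu_GG GG_ge1 by fastforce

lemma d2:
  assumes y: "1 \<le> y" "y \<le> r"
  shows "int (sum_le ks (cval ks (y - 1))) + mu ks (cval ks y) * (int (cval ks (y - 1)) + 1)
           = int s * (int (cval ks (y - 1)) + 1) - (\<Sum>l = 1..cval ks (y - 1) + 1. int (Kcount ks l) + 1)"
proof -
  let ?al = "cval ks (y - 1)"
  define X where "X = (\<Sum>l = 1..?al + 1. int (Kcount ks l) + 1)"
  have ab: "?al < cval ks y" using cval_mono[of "y - 1" y] y by simp
  have h1: "int s * int (?al + 1) - X = int (Am ks (?al + 1)) - int (?al + 1)"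
    using Kcount_sum[of ks "?al + 1"] unfolding X_def .
  have h2: "Am ks (?al + 1) = sum_le ks ?al + (?al + 1) * GG y"
    using Am_block[OF y, of "?al + 1"] ab by simp
  have h3: "mu ks (cval ks y) = int (GG y) - 1" by (rule mu_GG[OF y])
  have "int s * (int ?al + 1) - X = int (sum_le ks ?al) + (int ?al + 1) * int (GG y) - int ?al - 1"
    using h1 h2 by (simp add: algebra_simps)
  then show ?thesis unfolding X_def[symmetric] h3 by (simp add: algebra_simps)
qed

lemma d_mu0:
  assumes y: "1 \<le> y" "y \<le> r" and z: "mu ks (cval ks y) = 0"
  shows "poly (Ppoly ks (cval ks (y - 1)) (cval ks y)) (real a)
          = real a ^ sum_le ks (cval ks (y - 1)) * real (cval ks y - cval ks (y - 1))"
  unfolding poly_Ppoly z by simp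

lemma d_mu_ne:
  assumes y: "1 \<le> y" "y \<le> r" and z: "mu ks (cval ks y) \<noteq> 0" and a2: "2 \<le> a"
  shows "poly (Ppoly ks (cval ks (y - 1)) (cval ks y)) (real a)
          = real a ^ (sum_le ks (cval ks (y - 1)) + nat (mu ks (cval ks y)) * (cval ks (y - 1) + 1))
            * (1 - real a ^ (nat (mu ks (cval ks y)) * (cval ks y - cval ks (y - 1))))
            / (1 - real a ^ nat (mu ks (cval ks y)))"
proof -
  let ?m = "nat (mu ks (cval ks y))"
  have m: "1 \<le> ?m" using z mu_GG[OF y] GG_ge1[OF y] by simp
  have "a ^ 1 \<le> a ^ ?m" by (rule power_increasing) (use m a2 in auto)
  then have "a ^ ?m \<noteq> 1" using a2 unfolding power_one_right by linarith
  then have ne: "real a ^ ?m \<noteq> 1" by (metis of_nat_1 of_nat_eq_iff of_nat_power)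
  have "(\<Sum>d<cval ks y - cval ks (y - 1). real a ^ (?m * d)) = (\<Sum>d<cval ks y - cval ks (y - 1). (real a ^ ?m) ^ d)"
    by (simp add: power_mult)
  also have "\<dots> = (1 - (real a ^ ?m) ^ (cval ks y - cval ks (y - 1))) / (1 - real a ^ ?m)"
    using ne by (simp add: sum_gp_strict)
  finally show ?thesis unfolding poly_Ppoly by (simp add: power_mult)
qed

lemma block_sum:
  assumes y: "1 \<le> y" "y \<le> r" and a0: "0 < a"
  shows "(\<Sum>m\<in>{cval ks (y - 1)<..cval ks y}. real a powi (- int m + int (Am ks m)))
        = poly (Ppoly ks (cval ks (y - 1)) (cval ks y)) (real a)"
proof -
  let ?al = "cval ks (y - 1)" and ?be = "cval ks y"
  let ?m = "nat (mu ks ?be)" and ?sl = "sum_le ks ?al"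
  have G: "GG y = ?m + 1" using nat_mu[OF y] GG_ge1[OF y] by simp
  have ab: "?al < ?be" using cval_mono[of "y - 1" y] y by simp
  have tm: "real a powi (- int m + int (Am ks m)) = real a ^ (?sl + ?m * m)" if "m \<in> {?al<..?be}" for m
  proof -
    have A: "Am ks m = (?sl + ?m * m) + m" using Am_block[OF y, of m] that G by (simp add: algebra_simps)
    have "real a powi (- int m + int (Am ks m)) = real a ^ (Am ks m) / real a ^ m"
      using a0 by (intro powi_nat_diff) simp
    also have "\<dots> = real a ^ (?sl + ?m * m)" unfolding A using a0 by (simp add: power_add)
    finally show ?thesis .
  qed
  have "(\<Sum>m\<in>{?al<..?be}. real a powi (- int m + int (Am ks m))) = (\<Sum>m\<in>{?al<..?be}. real a ^ (?sl + ?m * m))"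
    by (rule sum.cong[OF refl]) (rule tm)
  also have "\<dots> = (\<Sum>d<?be - ?al. real a ^ (?sl + ?m * (?al + 1 + d)))"
    by (rule sum.reindex_bij_witness[of _ "\<lambda>d. ?al + 1 + d" "\<lambda>m. m - ?al - 1"]) auto
  also have "\<dots> = (\<Sum>d<?be - ?al. real a ^ (?sl + ?m * (?al + 1)) * real a ^ (?m * d))"
    by (rule sum.cong[OF refl]) (simp add: power_add[symmetric] algebra_simps)
  also have "\<dots> = poly (Ppoly ks ?al ?be) (real a)"
    unfolding poly_Ppoly by (simp add: sum_distrib_left)
  finally show ?thesis .
qed

lemma blocks:
  "y0 \<le> r \<Longrightarrow> (\<Sum>m = 1..cval ks y0. f m) = (\<Sum>y = 1..y0. \<Sum>m\<in>{cval ks (y - 1)<..cval ks y}. (f m :: real))"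
proof (induction y0)
  case 0
  then show ?case by (simp add: cval_def)
next
  case (Suc y0)
  have lt: "cval ks y0 < cval ks (Suc y0)" using cval_mono[of y0 "Suc y0"] Suc.prems by simp
  have "{1..cval ks (Suc y0)} = {1..cval ks y0} \<union> {cval ks y0<..cval ks (Suc y0)}" using lt by auto
  moreover have "{1..cval ks y0} \<inter> {cval ks y0<..cval ks (Suc y0)} = {}" by auto
  ultimately have "(\<Sum>m = 1..cval ks (Suc y0). f m) = (\<Sum>m = 1..cval ks y0. f m) + (\<Sum>m\<in>{cval ks y0<..cval ks (Suc y0)}. f m)"
    by (simp add: sum.union_disjoint)
  then show ?case using Suc by simp
qed

lemma d_sum:
  assumes a0: "0 < a"
  shows "(\<Sum>y = 1..r. poly (Ppoly ks (cval ks (y - 1)) (cval ks y)) (real a))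
       = (\<Sum>m = 1..kmax. real a powi (- int m + int (Am ks m)))"
proof -
  have "(\<Sum>m = 1..kmax. real a powi (- int m + int (Am ks m)))
      = (\<Sum>y = 1..r. \<Sum>m\<in>{cval ks (y - 1)<..cval ks y}. real a powi (- int m + int (Am ks m)))"
    using blocks[of r] cval_r by simp
  also have "\<dots> = (\<Sum>y = 1..r. poly (Ppoly ks (cval ks (y - 1)) (cval ks y)) (real a))"
  proof (rule sum.cong[OF refl])
    fix y assume "y \<in> {1..r}"
    then show "(\<Sum>m\<in>{cval ks (y - 1)<..cval ks y}. real a powi (- int m + int (Am ks m))) =
      poly (Ppoly ks (cval ks (y - 1)) (cval ks y)) (real a)"
      using block_sum[of y] a0 by simp
  qed
  finally show ?thesis by simp
qed

lemma Am_minus: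
  assumes y: "1 \<le> y" "y \<le> r"
  shows "Am ks (cval ks y) - cval ks y = sum_le ks (cval ks (y - 1)) + nat (mu ks (cval ks y)) * cval ks y"
    and "Am ks (cval ks (y - 1)) - cval ks (y - 1) = sum_le ks (cval ks (y - 1)) + nat (mu ks (cval ks y)) * cval ks (y - 1)"
proof -
  have G: "GG y = nat (mu ks (cval ks y)) + 1" using nat_mu[OF y] GG_ge1[OF y] by simp
  have ab: "cval ks (y - 1) < cval ks y" using cval_mono[of "y - 1" y] y by simp
  show "Am ks (cval ks y) - cval ks y = sum_le ks (cval ks (y - 1)) + nat (mu ks (cval ks y)) * cval ks y"
    using Am_block[OF y, of "cval ks y"] ab G by (simp add: algebra_simps)
  show "Am ks (cval ks (y - 1)) - cval ks (y - 1) = sum_le ks (cval ks (y - 1)) + nat (mu ks (cval ks y)) * cval ks (y - 1)"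
    using Am_block[OF y, of "cval ks (y - 1)"] ab G by (simp add: algebra_simps)
qed

definition dg :: "nat \<Rightarrow> nat" where
  "dg = (\<lambda>y. if y = 0 then 0 else degree (Ppoly ks (cval ks (y - 1)) (cval ks y)))"

lemma dg_eq: "y \<le> r \<Longrightarrow> dg y = Am ks (cval ks y) - cval ks y"
proof (cases "y = 0")
  case True
  then show ?thesis by (simp add: dg_def cval_def Am_def)
next
  case False
  assume "y \<le> r"
  then have y: "1 \<le> y" "y \<le> r" using False by auto
  have ab: "cval ks (y - 1) < cval ks y" using cval_mono[of "y - 1" y] y by simp
  show ?thesis unfolding dg_def using False degree_Ppoly[OF ab] Am_minus(1)[OF y] by simp
qed

lemma dg_step:
  assumes y: "1 \<le> y" "y \<le> r"
  shows "dg (y - 1) < dg y \<longleftrightarrow> mu ks (cval ks y) \<noteq> 0"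
    and "dg (y - 1) \<le> dg y"
proof -
  have ab: "cval ks (y - 1) < cval ks y" using cval_mono[of "y - 1" y] y by simp
  have e1: "dg y = sum_le ks (cval ks (y - 1)) + nat (mu ks (cval ks y)) * cval ks y"
    using dg_eq[of y] Am_minus(1)[OF y] y by simp
  have e0: "dg (y - 1) = sum_le ks (cval ks (y - 1)) + nat (mu ks (cval ks y)) * cval ks (y - 1)"
    using dg_eq[of "y - 1"] Am_minus(2)[OF y] y by simp
  have m0: "0 \<le> mu ks (cval ks y)" using mu_GG[OF y] GG_ge1[OF y] by simp
  show "dg (y - 1) < dg y \<longleftrightarrow> mu ks (cval ks y) \<noteq> 0"
    unfolding e0 e1 using ab m0 by auto
  show "dg (y - 1) \<le> dg y" unfolding e0 e1 using ab by simp
qed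

end

context kstr begin

lemma e_card: "int s - (int (Kcount ks m) + 1) = int (card {x. x < s \<and> m \<le> ks ! x}) - 1"
  using card_split[of s "\<lambda>x. ks ! x < m"] unfolding Kcount_def by (simp add: not_less)

lemma T_sub: "m \<le> kmax \<Longrightarrow> {x. x < s \<and> ks ! x = kmax} \<subseteq> {x. x < s \<and> m \<le> ks ! x}"
  by auto

lemma T_ne: "1 \<le> card {x. x < s \<and> ks ! x = kmax}"
proof -
  obtain x1 where "x1 < s" "ks ! x1 = kmax" using kmax_in by (auto simp: in_set_conv_nth)
  then show ?thesis by (intro card_ge1[of x1]) auto
qed

lemma e_ge0: "m \<le> kmax \<Longrightarrow> 0 \<le> int s - (int (Kcount ks m) + 1)"
proof -
  assume m: "m \<le> kmax"
  have "card {x. x < s \<and> ks ! x = kmax} \<le> card {x. x < s \<and> m \<le> ks ! x}"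
    using T_sub[OF m] by (intro card_mono) auto
  then show ?thesis using T_ne e_card[of m] by simp
qed

lemma e_zero:
  assumes m: "1 \<le> m" "m \<le> kmax"
  shows "int s - (int (Kcount ks m) + 1) = 0 \<longleftrightarrow>
         count (mset ks) kmax = 1 \<and> cval ks (r - 1) + 1 \<le> m \<and> m \<le> cval ks r"
proof
  assume z: "int s - (int (Kcount ks m) + 1) = 0"
  then have c1: "card {x. x < s \<and> m \<le> ks ! x} = 1" using e_card[of m] by simp
  have "card {x. x < s \<and> ks ! x = kmax} \<le> 1"
    using T_sub[OF m(2)] c1 card_mono[of "{x. x < s \<and> m \<le> ks ! x}" "{x. x < s \<and> ks ! x = kmax}"] by simp
  then have cnt: "count (mset ks) kmax = 1" using T_ne count_kmax by simp
  have "cval ks (r - 1) < m"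
  proof (rule ccontr)
    assume "\<not> cval ks (r - 1) < m"
    then have le: "m \<le> cval ks (r - 1)" by simp
    then have "r - 1 \<noteq> 0" using m by (auto simp: cval_def)
    then have r1: "1 \<le> r - 1" "r - 1 \<le> r" by auto
    obtain x0 where x0: "x0 < s" "ks ! x0 = cval ks (r - 1)" using cval_pos_in[OF r1] by (auto simp: in_set_conv_nth)
    obtain x1 where x1: "x1 < s" "ks ! x1 = kmax" using kmax_in by (auto simp: in_set_conv_nth)
    have "x0 \<noteq> x1" using x0 x1 cval_r1 by auto
    then have "2 \<le> card {x. x < s \<and> m \<le> ks ! x}"
      using x0 x1 le m by (intro card_ge2[of x0 _ x1]) auto
    then show False using c1 by simp
  qed
  then show "count (mset ks) kmax = 1 \<and> cval ks (r - 1) + 1 \<le> m \<and> m \<le> cval ks r"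
    using cnt cval_r m by simp
next
  assume h: "count (mset ks) kmax = 1 \<and> cval ks (r - 1) + 1 \<le> m \<and> m \<le> cval ks r"
  have "{x. x < s \<and> m \<le> ks ! x} = {x. x < s \<and> ks ! x = kmax}"
  proof (rule set_eqI, rule iffI)
    fix x assume "x \<in> {x. x < s \<and> m \<le> ks ! x}"
    then have "x < s" "cval ks (r - 1) < ks ! x" using h by auto
    then show "x \<in> {x. x < s \<and> ks ! x = kmax}" using top_iff[of "ks ! x"] by simp
  next
    fix x assume "x \<in> {x. x < s \<and> ks ! x = kmax}"
    then show "x \<in> {x. x < s \<and> m \<le> ks ! x}" using m by auto
  qed
  then show "int s - (int (Kcount ks m) + 1) = 0" using e_card[of m] h count_kmax by simp
qed

end

lemma sum_e: "(\<Sum>l = 1..m. int s - (int (Kcount ks l) + 1)) = int s * int m - (\<Sum>l = 1..m. int (Kcount ks l) + 1)"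
  by (simp add: sum_subtractf)

theorem theorem5p4:
  fixes a :: nat and ks :: "nat list"
  defines "ns \<equiv> map (\<lambda>k. a ^ k) ks"
  defines "s \<equiv> length ks"
  defines "N \<equiv> a ^ sum_list ks"
  defines "kmax \<equiv> Max (set ks)"
  defines "D \<equiv> undephased_defect (index_set ns) (fourier_kron ns)"
  defines "r \<equiv> rnum ks"
  defines "e \<equiv> (\<lambda>m. int s - (int (Kcount ks m) + 1))"
  assumes "prime a" and "ks \<noteq> []"
  shows
   "(kmax = 0 \<longrightarrow> D = 1) \<and>
    (0 < kmax \<longrightarrow>
      \<comment> \<open>(a)\<close>
      real D = (\<Sum>m = 0..kmax. real N / real a ^ m *
                  real (card {i \<in> index_set ns. elem_order ns i = a ^ m})) \<and>
      \<comment> \<open>(b)\<close>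
      real D = real N / real a *
        ((real a - 1) * (1 + (\<Sum>m = 1..kmax.
            real a powi (- int m + (\<Sum>x<s. int (min (ks ! x) m)))))
         + real a powi (- int kmax + int (sum_list ks))) \<and>
      \<comment> \<open>(c)\<close>
      real D = real N / real a *
        ((real a - 1) * (1 + (\<Sum>m = 1..kmax.
            real a powi (int s * int m - (\<Sum>l = 1..m. int (Kcount ks l) + 1))))
         + real a powi (int s * int kmax - (\<Sum>l = 1..kmax. int (Kcount ks l) + 1))) \<and>
      int s * int kmax - (\<Sum>l = 1..kmax. int (Kcount ks l) + 1)
        = - int kmax + int (sum_list ks) \<and>
      \<comment> \<open>(d)\<close>
      (\<forall>y \<in> {1..r}.
         mu ks (cval ks y) \<ge> 0 \<and>
         int (sum_le ks (cval ks (y - 1))) + mu ks (cval ks y) * (int (cval ks (y - 1)) + 1)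
           = int s * (int (cval ks (y - 1)) + 1)
             - (\<Sum>l = 1..cval ks (y - 1) + 1. int (Kcount ks l) + 1) \<and>
         (mu ks (cval ks y) = 0 \<longleftrightarrow> y = r \<and> count (mset ks) kmax = 1) \<and>
         (mu ks (cval ks y) = 0 \<longrightarrow>
            poly (Ppoly ks (cval ks (y - 1)) (cval ks y)) (real a)
              = real a ^ sum_le ks (cval ks (y - 1)) * real (cval ks y - cval ks (y - 1))) \<and>
         (mu ks (cval ks y) \<noteq> 0 \<longrightarrow>
            poly (Ppoly ks (cval ks (y - 1)) (cval ks y)) (real a)
              = real a ^ (sum_le ks (cval ks (y - 1)) + nat (mu ks (cval ks y)) * (cval ks (y - 1) + 1))
                * (1 - real a ^ (nat (mu ks (cval ks y)) * (cval ks y - cval ks (y - 1))))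
                / (1 - real a ^ nat (mu ks (cval ks y))))) \<and>
      real D = real N / real a *
        ((real a - 1) * (1 + (\<Sum>y = 1..r. poly (Ppoly ks (cval ks (y - 1)) (cval ks y)) (real a)))
         + real a powi (- int kmax + int (sum_list ks))) \<and>
      (let dg = (\<lambda>y. if y = 0 then 0 else degree (Ppoly ks (cval ks (y - 1)) (cval ks y))) in
         (\<forall>y. 1 \<le> y \<and> y < r \<longrightarrow> dg (y - 1) < dg y) \<and>
         dg (r - 1) \<le> dg r \<and>
         (dg (r - 1) = dg r \<longleftrightarrow> count (mset ks) kmax = 1)) \<and>
      \<comment> \<open>(e)\<close>
      real D = real N / real a *
        ((real a - 1) * nest (real a) (map e [1..<kmax + 1])
         + real a powi (int s * int kmax - (\<Sum>l = 1..kmax. int (Kcount ks l) + 1))) \<and>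
      (\<forall>m \<in> {1..kmax}. e m \<ge> 0 \<and>
         (e m = 0 \<longleftrightarrow> count (mset ks) kmax = 1 \<and> cval ks (r - 1) + 1 \<le> m \<and> m \<le> cval ks r)))"
proof -
  interpret pks a ks by unfold_locales (rule assms(8))
  have Kb: "\<forall>k\<in>set ks. k \<le> kmax" unfolding kmax_def using assms(9) by simp
  have DI: "D = undephased_defect I V" unfolding D_def ns_def ..
  have NNN: "N = NN" unfolding N_def NN_eq ..
  have a0: "0 < a" by (rule a_pos)
  have ra: "real a \<noteq> 0" using a0 by simp
  have pa: "real D = (\<Sum>m = 0..kmax. real N / real a ^ m * real (nm m))"
    unfolding DI NNN by (rule part_a[OF Kb])
  have pb: "real D = real N / real a *
        ((real a - 1) * (1 + (\<Sum>m = 1..kmax. real a powi (- int m + int (Am ks m))))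
         + real a powi (- int kmax + int (Am ks kmax)))"
    unfolding DI NNN by (rule part_b_gen[OF Kb])
  have Amk: "Am ks kmax = sum_list ks" by (rule Am_kmax[OF Kb])
  show ?thesis
  proof (intro conjI impI)
    assume k0: "kmax = 0"
    have "sum_list ks = 0" using Amk k0 unfolding Am_def by simp
    then have "N = 1" unfolding N_def by simp
    then have "real D = 1" using pa k0 nm_0 by simp
    then show "D = 1" by simp
  next
    assume kp: "0 < kmax"
    interpret kstr ks by unfold_locales (use assms(9) kp kmax_def in auto)
    have rr: "rnum ks = r" unfolding r_def ..
    have ss: "length ks = s" unfolding s_def ..
    have bsum: "(\<Sum>x<s. int (min (ks ! x) m)) = int (Am ks m)" for m
      unfolding s_def by (rule Am_int)
    have csum: "int s * int m - (\<Sum>l = 1..m. int (Kcount ks l) + 1) = - int m + int (Am ks m)" for m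
      unfolding s_def using Kcount_sum[of ks m] by simp
    have nmd: "nm m = card {i \<in> index_set ns. elem_order ns i = a ^ m}" for m
      unfolding nm_def ns_def ..
    show "real D = (\<Sum>m = 0..kmax. real N / real a ^ m * real (card {i \<in> index_set ns. elem_order ns i = a ^ m}))"
      using pa unfolding nmd .
    show "real D = real N / real a *
        ((real a - 1) * (1 + (\<Sum>m = 1..kmax.
            real a powi (- int m + (\<Sum>x<s. int (min (ks ! x) m)))))
         + real a powi (- int kmax + int (sum_list ks)))"
      using pb unfolding bsum Amk .
    show "real D = real N / real a *
        ((real a - 1) * (1 + (\<Sum>m = 1..kmax.
            real a powi (int s * int m - (\<Sum>l = 1..m. int (Kcount ks l) + 1))))
         + real a powi (int s * int kmax - (\<Sum>l = 1..kmax. int (Kcount ks l) + 1)))"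
      using pb unfolding csum .
    show "int s * int kmax - (\<Sum>l = 1..kmax. int (Kcount ks l) + 1) = - int kmax + int (sum_list ks)"
      unfolding csum Amk ..
    show "\<forall>y\<in>{1..r}.
         mu ks (cval ks y) \<ge> 0 \<and>
         int (sum_le ks (cval ks (y - 1))) + mu ks (cval ks y) * (int (cval ks (y - 1)) + 1)
           = int s * (int (cval ks (y - 1)) + 1)
             - (\<Sum>l = 1..cval ks (y - 1) + 1. int (Kcount ks l) + 1) \<and>
         (mu ks (cval ks y) = 0 \<longleftrightarrow> y = r \<and> count (mset ks) kmax = 1) \<and>
         (mu ks (cval ks y) = 0 \<longrightarrow>
            poly (Ppoly ks (cval ks (y - 1)) (cval ks y)) (real a)
              = real a ^ sum_le ks (cval ks (y - 1)) * real (cval ks y - cval ks (y - 1))) \<and>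
         (mu ks (cval ks y) \<noteq> 0 \<longrightarrow>
            poly (Ppoly ks (cval ks (y - 1)) (cval ks y)) (real a)
              = real a ^ (sum_le ks (cval ks (y - 1)) + nat (mu ks (cval ks y)) * (cval ks (y - 1) + 1))
                * (1 - real a ^ (nat (mu ks (cval ks y)) * (cval ks y - cval ks (y - 1))))
                / (1 - real a ^ nat (mu ks (cval ks y))))"
    proof
      fix y assume "y \<in> {1..r}"
      then have y: "1 \<le> y" "y \<le> rnum ks" using rr by auto
      show "mu ks (cval ks y) \<ge> 0 \<and>
         int (sum_le ks (cval ks (y - 1))) + mu ks (cval ks y) * (int (cval ks (y - 1)) + 1)
           = int s * (int (cval ks (y - 1)) + 1)
             - (\<Sum>l = 1..cval ks (y - 1) + 1. int (Kcount ks l) + 1) \<and>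
         (mu ks (cval ks y) = 0 \<longleftrightarrow> y = r \<and> count (mset ks) kmax = 1) \<and>
         (mu ks (cval ks y) = 0 \<longrightarrow>
            poly (Ppoly ks (cval ks (y - 1)) (cval ks y)) (real a)
              = real a ^ sum_le ks (cval ks (y - 1)) * real (cval ks y - cval ks (y - 1))) \<and>
         (mu ks (cval ks y) \<noteq> 0 \<longrightarrow>
            poly (Ppoly ks (cval ks (y - 1)) (cval ks y)) (real a)
              = real a ^ (sum_le ks (cval ks (y - 1)) + nat (mu ks (cval ks y)) * (cval ks (y - 1) + 1))
                * (1 - real a ^ (nat (mu ks (cval ks y)) * (cval ks y - cval ks (y - 1))))
                / (1 - real a ^ nat (mu ks (cval ks y))))"
        using mu_GG[OF y] GG_ge1[OF y] d2[OF y] mu_zero_iff[OF y] d_mu0[OF y] d_mu_ne[OF y _ a_ge2]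
        unfolding s_def r_def kmax_def by simp
    qed
    show "real D = real N / real a *
        ((real a - 1) * (1 + (\<Sum>y = 1..r. poly (Ppoly ks (cval ks (y - 1)) (cval ks y)) (real a)))
         + real a powi (- int kmax + int (sum_list ks)))"
      using pb unfolding r_def kmax_def d_sum[OF a0] Amk[unfolded kmax_def] .
    have dgs: "(\<forall>y. 1 \<le> y \<and> y < rnum ks \<longrightarrow> dg (y - 1) < dg y) \<and>
         dg (rnum ks - 1) \<le> dg (rnum ks) \<and>
         (dg (rnum ks - 1) = dg (rnum ks) \<longleftrightarrow> count (mset ks) (Max (set ks)) = 1)"
    proof (intro conjI allI impI)
      fix y assume y: "1 \<le> y \<and> y < rnum ks"
      then show "dg (y - 1) < dg y" using dg_step(1)[of y] mu_zero_iff[of y] by simp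
    next
      show "dg (rnum ks - 1) \<le> dg (rnum ks)" using dg_step(2)[of "rnum ks"] r_pos by simp
      show "dg (rnum ks - 1) = dg (rnum ks) \<longleftrightarrow> count (mset ks) (Max (set ks)) = 1"
        using dg_step[of "rnum ks"] mu_zero_iff[of "rnum ks"] r_pos by auto
    qed
    show "let dg = (\<lambda>y. if y = 0 then 0 else degree (Ppoly ks (cval ks (y - 1)) (cval ks y))) in
         (\<forall>y. 1 \<le> y \<and> y < r \<longrightarrow> dg (y - 1) < dg y) \<and>
         dg (r - 1) \<le> dg r \<and>
         (dg (r - 1) = dg r \<longleftrightarrow> count (mset ks) kmax = 1)"
      using dgs unfolding Let_def dg_def r_def kmax_def .
    have ne: "nest (real a) (map e [1..<kmax + 1]) = 1 + (\<Sum>m = 1..kmax. real a powi (int s * int m - (\<Sum>l = 1..m. int (Kcount ks l) + 1)))"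
    proof -
      have A: "nest (real a) (map e [1..<kmax + 1]) = 1 + (\<Sum>m\<in>{1..<1 + kmax}. real a powi (\<Sum>l = 1..m. e l))"
        using nest_sum[OF ra, of e 1 kmax] by (simp only: add.commute)
      have B: "{1..<1 + kmax} = {1..kmax}" by auto
      have C: "(\<Sum>l = 1..m. e l) = int s * int m - (\<Sum>l = 1..m. int (Kcount ks l) + 1)" for m
        unfolding e_def by (simp add: sum_subtractf)
      show ?thesis unfolding A B C ..
    qed
    show "real D = real N / real a *
        ((real a - 1) * nest (real a) (map e [1..<kmax + 1])
         + real a powi (int s * int kmax - (\<Sum>l = 1..kmax. int (Kcount ks l) + 1)))"
      using pb unfolding ne csum .
    show "\<forall>m \<in> {1..kmax}. e m \<ge> 0 \<and>
         (e m = 0 \<longleftrightarrow> count (mset ks) kmax = 1 \<and> cval ks (r - 1) + 1 \<le> m \<and> m \<le> cval ks r)"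
      using e_ge0 e_zero unfolding e_def s_def r_def kmax_def by auto
  qed
qed

end
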